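(* Let $(\mathbf T,\mathbf A,\mathrm{VAR},\mathrm{OP},\mathrm{ABS},\mathrm{FRESH},\mathrm{FRESHABS},\_[\_/\_]_\_)$ be an FS model. Then there exist functions $f:\mathrm{term}\to\mathbf T$ and $f_{Abs}:\mathrm{abs}\to\mathbf A$ such that, for all good terms $X,Y$, good abstractions $A$, all $inp:(\mathrm{index},\mathrm{term})\mathrm{input}$ and $binp:(\mathrm{bindex},\mathrm{abs})\mathrm{input}$ with good values and domains of cardinality $<|\mathrm{var}|$, and all $\delta,xs,x,ys,y$: $f(\mathrm{Var}\;xs\;x)=\mathrm{VAR}\;xs\;x$; $f(\mathrm{Op}\;\delta\;inp\;binp)=\mathrm{OP}\;\delta\;(\uparrow f\;inp)\;(\uparrow f_{Abs}\;binp)$; $f_{Abs}(\mathrm{Abs}\;xs\;x\;X)=\mathrm{ABS}\;xs\;x\;(f\;X)$; $f(X[Y/y]_{ys})=(f\;X)[(f\;Y)/y]_{ys}$; $f_{Abs}(A[Y/y]_{ys})=(f_{Abs}\;A)[(f\;Y)/y]_{ys}$; $\mathrm{fresh}\;xs\;x\;X\Rightarrow\mathrm{FRESH}\;xs\;x\;(f\;X)$; $\mathrm{freshAbs}\;xs\;x\;A\Rightarrow\mathrm{FRESHABS}\;xs\;x\;(f_{Abs}\;A)$. Moreover, if $g:\mathrm{term}\to\mathbf T$ and $g_{Abs}:\mathrm{abs}\to\mathbf A$ satisfy the same properties, then $f\;X=g\;X$ for all good terms $X$ and $f_{Abs}\;A=g_{Abs}\;A$ for all good abstractions $A$.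
   Context: Fix types $\mathrm{var}$, $\mathrm{varsort}$, $\mathrm{index}$, $\mathrm{bindex}$, $\mathrm{opsym}$, with $|\mathrm{var}|$ an infinite regular cardinal. $(\alpha,\beta)\,\mathrm{input}$ = partial functions $\alpha\to\beta\;\mathrm{option}$; $\mathrm{dom}\,f=\{i\mid f\,i\ne\mathrm{None}\}$; $\uparrow P\;inp$ means $P$ holds of all defined values of $inp$; $\uparrow g\;inp$ applies $g$ to all defined values. Terms ($\mathrm{term}$) and abstractions ($\mathrm{abs}$) are alpha-equivalence classes of the free datatypes $\mathrm{qterm}=\mathrm{qVar}\;\mathrm{varsort}\;\mathrm{var}\mid\mathrm{qOp}\;\mathrm{opsym}\;((\mathrm{index},\mathrm{qterm})\mathrm{input})\;((\mathrm{bindex},\mathrm{qabs})\mathrm{input})$, $\mathrm{qabs}=\mathrm{qAbs}\;\mathrm{varsort}\;\mathrm{var}\;\mathrm{qterm}$ ($x$ of varsort $xs$ bound in $X$ in $\mathrm{qAbs}\;xs\;x\;X$), with lifted constructors $\mathrm{Var},\mathrm{Op},\mathrm{Abs}$; $\mathrm{fresh}/\mathrm{freshAbs}\;xs\;x$: the variable $x$ of varsort $xs$ does not occur free; $\_[Y/y]_{ys}$: capture-avoiding substitution of $Y$ for free occurrences of the variable $y$ of varsort $ys$ (on terms and abstractions). Good: every $\mathrm{Op}$ node has inputs with domains of cardinality $<|\mathrm{var}|$. An FS model consists of types $\mathbf T,\mathbf A$ and operations $\mathrm{VAR}:\mathrm{varsort}\to\mathrm{var}\to\mathbf T$, $\mathrm{OP}:\mathrm{opsym}\to(\mathrm{index},\mathbf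 T)\mathrm{input}\to(\mathrm{bindex},\mathbf A)\mathrm{input}\to\mathbf T$, $\mathrm{ABS}:\mathrm{varsort}\to\mathrm{var}\to\mathbf T\to\mathbf A$, $\mathrm{FRESH}:\mathrm{varsort}\to\mathrm{var}\to\mathbf T\to\mathrm{bool}$, $\mathrm{FRESHABS}:\mathrm{varsort}\to\mathrm{var}\to\mathbf A\to\mathrm{bool}$, $\_[\_/\_]_\_:\mathbf T\to\mathbf T\to\mathrm{var}\to\mathrm{varsort}\to\mathbf T$ and $\_[\_/\_]_\_:\mathbf A\to\mathbf T\to\mathrm{var}\to\mathrm{varsort}\to\mathbf A$, satisfying, for all arguments (with $inp,binp$ ranging over inputs whose domains have cardinality $<|\mathrm{var}|$): (F1) $(ys,y)\ne(xs,x)\Rightarrow\mathrm{FRESH}\;ys\;y\;(\mathrm{VAR}\;xs\;x)$; (F2) $\uparrow(\mathrm{FRESH}\;ys\;y)\;inp\wedge\uparrow(\mathrm{FRESHABS}\;ys\;y)\;binp\Rightarrow\mathrm{FRESH}\;ys\;y\;(\mathrm{OP}\;\delta\;inp\;binp)$; (F3) $(ys,y)=(xs,x)\vee\mathrm{FRESH}\;ys\;y\;X\Rightarrow\mathrm{FRESHABS}\;ys\;y\;(\mathrm{ABS}\;xs\;x\;X)$; (S1) $(\mathrm{VAR}\;xs\;x)[Y/y]_{ys}=Y$ if $(xs,x)=(ys,y)$, else $\mathrm{VAR}\;xs\;x$; (S2) $(\mathrm{OP}\;\delta\;inp\;binp)[Y/y]_{ys}=\mathrm{OP}\;\delta\;(\uparrow(\_[Y/y]_{ys})\;inp)\;(\uparrow(\_[Y/y]_{ys})\;binp)$;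 (S3) $(xs,x)\ne(ys,y)\wedge\mathrm{FRESH}\;xs\;x\;Y\Rightarrow(\mathrm{ABS}\;xs\;x\;X)[Y/y]_{ys}=\mathrm{ABS}\;xs\;x\;(X[Y/y]_{ys})$; (R1) $y\notin\{x,x'\}\wedge\mathrm{FRESH}\;xs\;y\;X\wedge\mathrm{FRESH}\;xs\;y\;X'\wedge X[(\mathrm{VAR}\;xs\;y)/x]_{xs}=X'[(\mathrm{VAR}\;xs\;y)/x']_{xs}\Rightarrow\mathrm{ABS}\;xs\;x\;X=\mathrm{ABS}\;xs\;x'\;X'$; (R2) $\mathrm{FRESH}\;xs\;y\;X\Rightarrow\mathrm{ABS}\;xs\;x\;X=\mathrm{ABS}\;xs\;y\;(X[(\mathrm{VAR}\;xs\;y)/x]_{xs})$. *)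

theory Defs
  imports Main
begin

unbundle cardinal_syntax

text \<open>An input is a partial function, represented as a function into option.\<close>

definition liftAll :: "('b \<Rightarrow> bool) \<Rightarrow> ('a \<Rightarrow> 'b option) \<Rightarrow> bool" where
  "liftAll P inp \<equiv> \<forall>i v. inp i = Some v \<longrightarrow> P v"

definition lift :: "('b \<Rightarrow> 'c) \<Rightarrow> ('a \<Rightarrow> 'b option) \<Rightarrow> 'a \<Rightarrow> 'c option" where
  "lift h inp \<equiv> \<lambda>i. map_option h (inp i)"

datatype ('index,'bindex,'varSort,'var,'opSym) qTerm =
  qVar 'varSort 'var
| qOp 'opSym "'index \<Rightarrow> ('index,'bindex,'varSort,'var,'opSym) qTerm option"
           "'bindex \<Rightarrow> ('index,'bindex,'varSort,'var,'opSym) qAbs option"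
and ('index,'bindex,'varSort,'var,'opSym) qAbs =
  qAbs 'varSort 'var "('index,'bindex,'varSort,'var,'opSym) qTerm"

primrec qFresh and qFreshAbs where
  "qFresh xs x (qVar ys y) = (xs \<noteq> ys \<or> x \<noteq> y)"
| "qFresh xs x (qOp d inp binp) =
     ((\<forall>i. pred_option (qFresh xs x) (inp i)) \<and> (\<forall>i. pred_option (qFreshAbs xs x) (binp i)))"
| "qFreshAbs xs x (qAbs ys y X) = ((xs = ys \<and> x = y) \<or> qFresh xs x X)"

text \<open>Absolute freshness: the variable does not occur at all (neither free nor bound).\<close>
primrec qAFresh and qAFreshAbs where
  "qAFresh xs x (qVar ys y) = (xs \<noteq> ys \<or> x \<noteq> y)"
| "qAFresh xs x (qOp d inp binp) =
     ((\<forall>i. pred_option (qAFresh xs x) (inp i)) \<and> (\<forall>i. pred_option (qAFreshAbs xs x) (binp i)))"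
| "qAFreshAbs xs x (qAbs ys y X) = ((xs \<noteq> ys \<or> x \<noteq> y) \<and> qAFresh xs x X)"

definition sw :: "'varSort \<Rightarrow> 'var \<Rightarrow> 'var \<Rightarrow> 'varSort \<Rightarrow> 'var \<Rightarrow> 'var" where
  "sw zs x y zs' z \<equiv> (if zs = zs' then (if z = x then y else if z = y then x else z) else z)"

primrec qSwap and qSwapAbs where
  "qSwap zs x y (qVar zs' z) = qVar zs' (sw zs x y zs' z)"
| "qSwap zs x y (qOp d inp binp) =
     qOp d (\<lambda>i. map_option (qSwap zs x y) (inp i)) (\<lambda>i. map_option (qSwapAbs zs x y) (binp i))"
| "qSwapAbs zs x y (qAbs zs' z X) = qAbs zs' (sw zs x y zs' z) (qSwap zs x y X)"

primrec qGood :: "('index,'bindex,'varSort,'var,'opSym) qTerm \<Rightarrow> bool"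
  and qGoodAbs :: "('index,'bindex,'varSort,'var,'opSym) qAbs \<Rightarrow> bool" where
  "qGood (qVar xs x) = True"
| "qGood (qOp d inp binp) =
     ((\<forall>i. pred_option qGood (inp i)) \<and> (\<forall>i. pred_option qGoodAbs (binp i)) \<and>
      |dom inp| <o |UNIV :: 'var set| \<and> |dom binp| <o |UNIV :: 'var set| )"
| "qGoodAbs (qAbs xs x X) = qGood X"

inductive alpha :: "('index,'bindex,'varSort,'var,'opSym) qTerm \<Rightarrow> ('index,'bindex,'varSort,'var,'opSym) qTerm \<Rightarrow> bool"
  and alphaAbs :: "('index,'bindex,'varSort,'var,'opSym) qAbs \<Rightarrow> ('index,'bindex,'varSort,'var,'opSym) qAbs \<Rightarrow> bool"
where
  alpha_Var: "alpha (qVar xs x) (qVar xs x)"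
| alpha_Op: "\<lbrakk>\<forall>i. (inp i = None) = (inp' i = None);
              \<forall>i. (binp i = None) = (binp' i = None);
              \<forall>i X X'. inp i = Some X \<and> inp' i = Some X' \<longrightarrow> alpha X X';
              \<forall>i A A'. binp i = Some A \<and> binp' i = Some A' \<longrightarrow> alphaAbs A A'\<rbrakk>
             \<Longrightarrow> alpha (qOp d inp binp) (qOp d inp' binp')"
| alphaAbs_Abs: "\<lbrakk>y \<noteq> x; y \<noteq> x'; qAFresh xs y X; qAFresh xs y X';
                  alpha (qSwap xs y x X) (qSwap xs y x' X')\<rbrakk>
                 \<Longrightarrow> alphaAbs (qAbs xs x X) (qAbs xs x' X')"

text \<open>Terms and abstractions: classes modulo alpha (we quotient by the equivalence closure,
  which coincides with alpha wherever alpha is an equivalence).\<close>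

quotient_type ('index,'bindex,'varSort,'var,'opSym) "term" =
  "('index,'bindex,'varSort,'var,'opSym) qTerm" / "equivclp alpha"
  morphisms rep_term abs_term
  by simp

quotient_type ('index,'bindex,'varSort,'var,'opSym) "abs" =
  "('index,'bindex,'varSort,'var,'opSym) qAbs" / "equivclp alphaAbs"
  morphisms rep_abs abs_abs
  by simp

text \<open>Environments map (sort, variable) to an optional replacement; None means identity.
  Bound variables are renamed to a variable that occurs nowhere in the body and in no
  replacement term.\<close>

primrec qPsubst :: "('varSort \<Rightarrow> 'var \<Rightarrow> ('index,'bindex,'varSort,'var,'opSym) qTerm option)
                     \<Rightarrow> ('index,'bindex,'varSort,'var,'opSym) qTerm \<Rightarrow> ('index,'bindex,'varSort,'var,'opSym) qTerm"
  and qPsubstAbs :: "('varSort \<Rightarrow> 'var \<Rightarrow> ('index,'bindex,'varSort,'var,'opSym) qTerm option)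
                     \<Rightarrow> ('index,'bindex,'varSort,'var,'opSym) qAbs \<Rightarrow> ('index,'bindex,'varSort,'var,'opSym) qAbs"
where
  "qPsubst rho (qVar xs x) = (case rho xs x of None \<Rightarrow> qVar xs x | Some Z \<Rightarrow> Z)"
| "qPsubst rho (qOp d inp binp) =
     qOp d (\<lambda>i. map_option (qPsubst rho) (inp i)) (\<lambda>i. map_option (qPsubstAbs rho) (binp i))"
| "qPsubstAbs rho (qAbs xs x X) =
     (let x' = (SOME x'. qAFresh xs x' X \<and> (\<forall>zs z Z. rho zs z = Some Z \<longrightarrow> qAFresh xs x' Z))
      in qAbs xs x' (qPsubst (rho(xs := (rho xs)(x := Some (qVar xs x')))) X))"

definition qSubst where
  "qSubst X Y y ys \<equiv> qPsubst ((\<lambda>_ _. None)(ys := (\<lambda>_. None)(y := Some Y))) X"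

definition qSubstAbs where
  "qSubstAbs A Y y ys \<equiv> qPsubstAbs ((\<lambda>_ _. None)(ys := (\<lambda>_. None)(y := Some Y))) A"

definition Var :: "'varSort \<Rightarrow> 'var \<Rightarrow> ('index,'bindex,'varSort,'var,'opSym) term" where
  "Var xs x \<equiv> abs_term (qVar xs x)"

definition Op :: "'opSym \<Rightarrow> ('index \<Rightarrow> ('index,'bindex,'varSort,'var,'opSym) term option)
                 \<Rightarrow> ('bindex \<Rightarrow> ('index,'bindex,'varSort,'var,'opSym) abs option)
                 \<Rightarrow> ('index,'bindex,'varSort,'var,'opSym) term" where
  "Op d inp binp \<equiv> abs_term (qOp d (lift rep_term inp) (lift rep_abs binp))"

definition Abs :: "'varSort \<Rightarrow> 'var \<Rightarrow> ('index,'bindex,'varSort,'var,'opSym) term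
                  \<Rightarrow> ('index,'bindex,'varSort,'var,'opSym) abs" where
  "Abs xs x X \<equiv> abs_abs (qAbs xs x (rep_term X))"

definition fresh :: "'varSort \<Rightarrow> 'var \<Rightarrow> ('index,'bindex,'varSort,'var,'opSym) term \<Rightarrow> bool" where
  "fresh xs x X \<equiv> qFresh xs x (rep_term X)"

definition freshAbs :: "'varSort \<Rightarrow> 'var \<Rightarrow> ('index,'bindex,'varSort,'var,'opSym) abs \<Rightarrow> bool" where
  "freshAbs xs x A \<equiv> qFreshAbs xs x (rep_abs A)"

definition good :: "('index,'bindex,'varSort,'var,'opSym) term \<Rightarrow> bool" where
  "good X \<equiv> qGood (rep_term X)"

definition goodAbs :: "('index,'bindex,'varSort,'var,'opSym) abs \<Rightarrow> bool" where
  "goodAbs A \<equiv> qGoodAbs (rep_abs A)"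

text \<open>subst X Y y ys is X[Y/y]_ys.\<close>
definition subst :: "('index,'bindex,'varSort,'var,'opSym) term \<Rightarrow> ('index,'bindex,'varSort,'var,'opSym) term
                    \<Rightarrow> 'var \<Rightarrow> 'varSort \<Rightarrow> ('index,'bindex,'varSort,'var,'opSym) term" where
  "subst X Y y ys \<equiv> abs_term (qSubst (rep_term X) (rep_term Y) y ys)"

definition substAbs :: "('index,'bindex,'varSort,'var,'opSym) abs \<Rightarrow> ('index,'bindex,'varSort,'var,'opSym) term
                    \<Rightarrow> 'var \<Rightarrow> 'varSort \<Rightarrow> ('index,'bindex,'varSort,'var,'opSym) abs" where
  "substAbs A Y y ys \<equiv> abs_abs (qSubstAbs (rep_abs A) (rep_term Y) y ys)"

definition FSmodel ::
  "('varSort \<Rightarrow> 'var \<Rightarrow> 'T)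
   \<Rightarrow> ('opSym \<Rightarrow> ('index \<Rightarrow> 'T option) \<Rightarrow> ('bindex \<Rightarrow> 'A option) \<Rightarrow> 'T)
   \<Rightarrow> ('varSort \<Rightarrow> 'var \<Rightarrow> 'T \<Rightarrow> 'A)
   \<Rightarrow> ('varSort \<Rightarrow> 'var \<Rightarrow> 'T \<Rightarrow> bool)
   \<Rightarrow> ('varSort \<Rightarrow> 'var \<Rightarrow> 'A \<Rightarrow> bool)
   \<Rightarrow> ('T \<Rightarrow> 'T \<Rightarrow> 'var \<Rightarrow> 'varSort \<Rightarrow> 'T)
   \<Rightarrow> ('A \<Rightarrow> 'T \<Rightarrow> 'var \<Rightarrow> 'varSort \<Rightarrow> 'A) \<Rightarrow> bool" where
  "FSmodel VAR OP ABS FRESH FRESHABS SUBST SUBSTABS \<equiv>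
    (\<forall>ys y xs x. (ys, y) \<noteq> (xs, x) \<longrightarrow> FRESH ys y (VAR xs x)) \<and>
    (\<forall>ys y d inp binp. |dom inp| <o |UNIV :: 'var set| \<and> |dom binp| <o |UNIV :: 'var set| \<and>
        liftAll (FRESH ys y) inp \<and> liftAll (FRESHABS ys y) binp
        \<longrightarrow> FRESH ys y (OP d inp binp)) \<and>
    (\<forall>ys y xs x X. (ys, y) = (xs, x) \<or> FRESH ys y X \<longrightarrow> FRESHABS ys y (ABS xs x X)) \<and>
    (\<forall>xs x Y y ys. SUBST (VAR xs x) Y y ys = (if (xs, x) = (ys, y) then Y else VAR xs x)) \<and>
    (\<forall>d inp binp Y y ys. |dom inp| <o |UNIV :: 'var set| \<and> |dom binp| <o |UNIV :: 'var set|
        \<longrightarrow> SUBST (OP d inp binp) Y y ys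
            = OP d (lift (\<lambda>X. SUBST X Y y ys) inp) (lift (\<lambda>A. SUBSTABS A Y y ys) binp)) \<and>
    (\<forall>xs x X Y y ys. (xs, x) \<noteq> (ys, y) \<and> FRESH xs x Y
        \<longrightarrow> SUBSTABS (ABS xs x X) Y y ys = ABS xs x (SUBST X Y y ys)) \<and>
    (\<forall>xs x x' y X X'. y \<notin> {x, x'} \<and> FRESH xs y X \<and> FRESH xs y X' \<and>
        SUBST X (VAR xs y) x xs = SUBST X' (VAR xs y) x' xs
        \<longrightarrow> ABS xs x X = ABS xs x' X') \<and>
    (\<forall>xs x y X. FRESH xs y X \<longrightarrow> ABS xs x X = ABS xs y (SUBST X (VAR xs y) x xs))"

definition FSmorph ::
  "('varSort \<Rightarrow> 'var \<Rightarrow> 'T)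
   \<Rightarrow> ('opSym \<Rightarrow> ('index \<Rightarrow> 'T option) \<Rightarrow> ('bindex \<Rightarrow> 'A option) \<Rightarrow> 'T)
   \<Rightarrow> ('varSort \<Rightarrow> 'var \<Rightarrow> 'T \<Rightarrow> 'A)
   \<Rightarrow> ('varSort \<Rightarrow> 'var \<Rightarrow> 'T \<Rightarrow> bool)
   \<Rightarrow> ('varSort \<Rightarrow> 'var \<Rightarrow> 'A \<Rightarrow> bool)
   \<Rightarrow> ('T \<Rightarrow> 'T \<Rightarrow> 'var \<Rightarrow> 'varSort \<Rightarrow> 'T)
   \<Rightarrow> ('A \<Rightarrow> 'T \<Rightarrow> 'var \<Rightarrow> 'varSort \<Rightarrow> 'A)
   \<Rightarrow> (('index,'bindex,'varSort,'var,'opSym) term \<Rightarrow> 'T)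
   \<Rightarrow> (('index,'bindex,'varSort,'var,'opSym) abs \<Rightarrow> 'A) \<Rightarrow> bool" where
  "FSmorph VAR OP ABS FRESH FRESHABS SUBST SUBSTABS f fAbs \<equiv>
    (\<forall>xs x. f (Var xs x) = VAR xs x) \<and>
    (\<forall>d inp binp. liftAll good inp \<and> liftAll goodAbs binp \<and>
        |dom inp| <o |UNIV :: 'var set| \<and> |dom binp| <o |UNIV :: 'var set|
        \<longrightarrow> f (Op d inp binp) = OP d (lift f inp) (lift fAbs binp)) \<and>
    (\<forall>xs x X. good X \<longrightarrow> fAbs (Abs xs x X) = ABS xs x (f X)) \<and>
    (\<forall>X Y y ys. good X \<and> good Y \<longrightarrow> f (subst X Y y ys) = SUBST (f X) (f Y) y ys) \<and>
    (\<forall>A Y y ys. goodAbs A \<and> good Y \<longrightarrow> fAbs (substAbs A Y y ys) = SUBSTABS (fAbs A) (f Y) y ys) \<and>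
    (\<forall>xs x X. good X \<and> fresh xs x X \<longrightarrow> FRESH xs x (f X)) \<and>
    (\<forall>xs x A. goodAbs A \<and> freshAbs xs x A \<longrightarrow> FRESHABS xs x (fAbs A))"

end

theory Submission
  imports Defs
begin

lemma finite_less_inf:
  assumes "finite A" "infinite (UNIV :: 'v set)"
  shows "|A| <o |UNIV :: 'v set|"
  using finite_ordLess_infinite[of "|A|" "|UNIV :: 'v set|"] assms
  by (simp add: card_of_well_order_on Field_card_of)

lemma Un_less_inf:
  assumes "infinite (UNIV :: 'v set)" "|A| <o |UNIV :: 'v set|" "|B| <o |UNIV :: 'v set|"
  shows "|A \<union> B| <o |UNIV :: 'v set|"
  using card_of_Un_ordLess_infinite assms by blast

lemma exists_fresh_pair:
  assumes "|S| <o |UNIV :: 'v set|"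
  shows "\<exists>x::'v. (xs, x) \<notin> S"
proof (rule ccontr)
  assume "\<not> ?thesis"
  hence "UNIV \<subseteq> snd ` S" by force
  hence "|UNIV :: 'v set| \<le>o |snd ` S|" by (rule card_of_mono1)
  also have "|snd ` S| \<le>o |S|" by (rule card_of_image)
  finally show False using assms not_ordLess_ordLeq by blast
qed

lemma qTerm_qAbs_induct_aux:
  fixes P1 :: "('index,'bindex,'varSort,'var,'opSym) qTerm \<Rightarrow> bool"
    and P2 :: "('index,'bindex,'varSort,'var,'opSym) qAbs \<Rightarrow> bool"
  assumes V: "\<And>xs x. P1 (qVar xs x)"
    and O: "\<And>d inp binp. (\<And>i X. inp i = Some X \<Longrightarrow> P1 X) \<Longrightarrow> (\<And>i A. binp i = Some A \<Longrightarrow> P2 A)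
        \<Longrightarrow> P1 (qOp d inp binp)"
    and Ab: "\<And>xs x X. P1 X \<Longrightarrow> P2 (qAbs xs x X)"
  shows "P1 X \<and> P2 A"
  apply (rule qTerm_qAbs.induct)
    apply (rule V)
   apply (rule O)
    apply (metis option.set_intros rangeI)
   apply (metis option.set_intros rangeI)
  apply (erule Ab)
  done

lemma qT_induct[case_names Var Op Abs]:
  fixes P1 :: "('index,'bindex,'varSort,'var,'opSym) qTerm \<Rightarrow> bool"
    and P2 :: "('index,'bindex,'varSort,'var,'opSym) qAbs \<Rightarrow> bool"
  assumes "\<And>xs x. P1 (qVar xs x)"
    and "\<And>d inp binp. (\<And>i X. inp i = Some X \<Longrightarrow> P1 X) \<Longrightarrow> (\<And>i A. binp i = Some A \<Longrightarrow> P2 A)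
        \<Longrightarrow> P1 (qOp d inp binp)"
    and "\<And>xs x X. P1 X \<Longrightarrow> P2 (qAbs xs x X)"
  shows "P1 X"
  using qTerm_qAbs_induct_aux[of P1 P2] assms by blast

lemma qA_induct[case_names Var Op Abs]:
  fixes P1 :: "('index,'bindex,'varSort,'var,'opSym) qTerm \<Rightarrow> bool"
    and P2 :: "('index,'bindex,'varSort,'var,'opSym) qAbs \<Rightarrow> bool"
  assumes "\<And>xs x. P1 (qVar xs x)"
    and "\<And>d inp binp. (\<And>i X. inp i = Some X \<Longrightarrow> P1 X) \<Longrightarrow> (\<And>i A. binp i = Some A \<Longrightarrow> P2 A)
        \<Longrightarrow> P1 (qOp d inp binp)"
    and "\<And>xs x X. P1 X \<Longrightarrow> P2 (qAbs xs x X)"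
  shows "P2 A"
  using qTerm_qAbs_induct_aux[of P1 P2] assms by blast

lemma pred_option_iff: "pred_option P oo = (\<forall>y. oo = Some y \<longrightarrow> P y)"
  by (cases oo) auto

section \<open>Variables of quasi-terms\<close>

definition "qVars X = {(xs, x). \<not> qAFresh xs x X}"
definition "qVarsAbs A = {(xs, x). \<not> qAFreshAbs xs x A}"

lemma qAFresh_qVars:
  fixes X :: "('index,'bindex,'varSort,'var,'opSym) qTerm"
    and A :: "('index,'bindex,'varSort,'var,'opSym) qAbs"
  shows "qAFresh xs x X = ((xs, x) \<notin> qVars X)"
  "qAFreshAbs xs x A = ((xs, x) \<notin> qVarsAbs A)"
  by (auto simp: qVars_def qVarsAbs_def)

lemma qVars_simps:
  shows "qVars (qVar xs x) = {(xs, x)}"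
  "qVars (qOp d inp binp) =
     (\<Union>i\<in>dom inp. qVars (the (inp i))) \<union> (\<Union>i\<in>dom binp. qVarsAbs (the (binp i)))"
  "qVarsAbs (qAbs xs x X) = insert (xs, x) (qVars X)"
  by (auto simp: qVars_def qVarsAbs_def pred_option_def dom_def split: option.splits)

lemma qAFresh_qFresh:
  fixes X :: "('index,'bindex,'varSort,'var,'opSym) qTerm"
    and A :: "('index,'bindex,'varSort,'var,'opSym) qAbs"
  shows "qAFresh xs x X \<Longrightarrow> qFresh xs x X"
  "qAFreshAbs xs x A \<Longrightarrow> qFreshAbs xs x A"
  by (induct X and A rule: qT_induct qA_induct) (auto simp: pred_option_iff)

locale VV =
  fixes dummy :: "'var itself"
  assumes var_inf: "infinite (UNIV :: 'var set)"
    and var_reg: "regularCard |UNIV :: 'var set|"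
begin

lemma Cinf_var: "Cinfinite |UNIV :: 'var set|"
  using var_inf by (simp add: cinfinite_def card_of_card_order_on Field_card_of)

lemma qGood_qVars:
  fixes X :: "('index,'bindex,'varSort,'var,'opSym) qTerm"
    and A :: "('index,'bindex,'varSort,'var,'opSym) qAbs"
  shows "qGood X \<Longrightarrow> |qVars X| <o |UNIV :: 'var set|"
    and "qGoodAbs A \<Longrightarrow> |qVarsAbs A| <o |UNIV :: 'var set|"
proof (induct X and A rule: qT_induct qA_induct)
  case (Var xs x)
  then show ?case using finite_less_inf[OF _ var_inf, of "{(xs,x)}"] by (simp add: qVars_simps)
next
  case (Op d inp binp)
  have "|\<Union>i\<in>dom inp. qVars (the (inp i))| <o |UNIV :: 'var set|"
  proof (rule regularCard_UNION_bound[OF Cinf_var var_reg])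
    show "|dom inp| <o |UNIV :: 'var set|" using Op by simp
    fix i assume "i \<in> dom inp"
    then obtain X where "inp i = Some X" by auto
    then show "|qVars (the (inp i))| <o |UNIV :: 'var set|"
      using Op by (auto simp: pred_option_iff)
  qed
  moreover have "|\<Union>i\<in>dom binp. qVarsAbs (the (binp i))| <o |UNIV :: 'var set|"
  proof (rule regularCard_UNION_bound[OF Cinf_var var_reg])
    show "|dom binp| <o |UNIV :: 'var set|" using Op by simp
    fix i assume "i \<in> dom binp"
    then obtain X where "binp i = Some X" by auto
    then show "|qVarsAbs (the (binp i))| <o |UNIV :: 'var set|"
      using Op by (auto simp: pred_option_iff)
  qed
  ultimately show ?case unfolding qVars_simps by (rule Un_less_inf[OF var_inf])
next
  case (Abs xs x X)
  then show ?case using Un_less_inf[OF var_inf, of "{(xs,x)}" "qVars X"] finite_less_inf[OF _ var_inf, of "{(xs,x)}"]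
    by (simp add: qVars_simps)
qed

end

lemma map_option_id_cong: "(\<And>y. oo = Some y \<Longrightarrow> f y = y) \<Longrightarrow> map_option f oo = oo"
  by (cases oo) auto

lemma map_option_cong2: "(\<And>y. oo = Some y \<Longrightarrow> f y = g y) \<Longrightarrow> map_option f oo = map_option g oo"
  by (cases oo) auto

lemma dom_map_option[simp]: "dom (\<lambda>i. map_option f (inp i)) = dom inp"
  by (auto simp: dom_def)

lemma sw_invol[simp]: "sw zs x y zs' (sw zs x y zs' z) = z"
  by (auto simp: sw_def)

lemma sw_sym: "sw zs x y = sw zs y x"
  by (auto simp: sw_def fun_eq_iff)

lemma sw_same[simp]: "sw zs x x zs' z = z"
  by (auto simp: sw_def)

lemma sw_inj[simp]: "(sw zs x y s a = sw zs x y s b) = (a = b)"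
  by (metis sw_invol)

lemma sw_conj: "sw zs a b s (sw xs y x s v) = sw xs (sw zs a b xs y) (sw zs a b xs x) s (sw zs a b s v)"
  by (auto simp: sw_def)

lemma sw_other[simp]: "s \<noteq> zs \<Longrightarrow> sw zs x y s v = v"
  by (auto simp: sw_def)

lemma sw_simps[simp]: "sw zs x y zs x = y" "sw zs x y zs y = x"
  "v \<noteq> x \<Longrightarrow> v \<noteq> y \<Longrightarrow> sw zs x y s v = v"
  by (auto simp: sw_def)

lemma qSwap_invol[simp]:
  fixes X :: "('index,'bindex,'varSort,'var,'opSym) qTerm"
    and A :: "('index,'bindex,'varSort,'var,'opSym) qAbs"
  shows "qSwap zs x y (qSwap zs x y X) = X" "qSwapAbs zs x y (qSwapAbs zs x y A) = A"
  by (induct X and A rule: qT_induct qA_induct)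
     (auto simp: option.map_comp intro!: ext map_option_id_cong)

lemma qSwap_sym:
  fixes X :: "('index,'bindex,'varSort,'var,'opSym) qTerm"
    and A :: "('index,'bindex,'varSort,'var,'opSym) qAbs"
  shows "qSwap zs x y X = qSwap zs y x X" "qSwapAbs zs x y A = qSwapAbs zs y x A"
  by (induct X and A rule: qT_induct qA_induct)
     (auto simp: sw_sym[of zs x y] intro!: ext map_option_cong2)

lemma qSwap_same[simp]:
  fixes X :: "('index,'bindex,'varSort,'var,'opSym) qTerm"
    and A :: "('index,'bindex,'varSort,'var,'opSym) qAbs"
  shows "qSwap zs x x X = X" "qSwapAbs zs x x A = A"
  by (induct X and A rule: qT_induct qA_induct)
     (auto intro!: ext map_option_id_cong)

lemma qAFresh_qSwap:
  fixes X :: "('index,'bindex,'varSort,'var,'opSym) qTerm"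
    and A :: "('index,'bindex,'varSort,'var,'opSym) qAbs"
  shows "qAFresh s v (qSwap zs a b X) = qAFresh s (sw zs a b s v) X"
    "qAFreshAbs s v (qSwapAbs zs a b A) = qAFreshAbs s (sw zs a b s v) A"
  by (induct X and A rule: qT_induct qA_induct)
     (auto simp: pred_option_iff, (metis sw_invol)+)

lemma qFresh_qSwap:
  fixes X :: "('index,'bindex,'varSort,'var,'opSym) qTerm"
    and A :: "('index,'bindex,'varSort,'var,'opSym) qAbs"
  shows "qFresh s v (qSwap zs a b X) = qFresh s (sw zs a b s v) X"
    "qFreshAbs s v (qSwapAbs zs a b A) = qFreshAbs s (sw zs a b s v) A"
  by (induct X and A rule: qT_induct qA_induct)
     (auto simp: pred_option_iff, (metis sw_invol)+)


lemma qGood_qSwap[simp]: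
  fixes X :: "('index,'bindex,'varSort,'var,'opSym) qTerm"
    and A :: "('index,'bindex,'varSort,'var,'opSym) qAbs"
  shows "qGood (qSwap zs a b X) = qGood X" "qGoodAbs (qSwapAbs zs a b A) = qGoodAbs A"
proof (induct X and A rule: qT_induct qA_induct)
  case (Op d inp binp)
  have 1: "(\<forall>i. pred_option qGood (map_option (qSwap zs a b) (inp i))) = (\<forall>i. pred_option qGood (inp i))"
  proof -
    have "pred_option qGood (map_option (qSwap zs a b) (inp i)) = pred_option qGood (inp i)" for i
      using Op(1)[of i] by (cases "inp i") auto
    then show ?thesis by simp
  qed
  have 2: "(\<forall>i. pred_option qGoodAbs (map_option (qSwapAbs zs a b) (binp i))) = (\<forall>i. pred_option qGoodAbs (binp i))"
  proof -
    have "pred_option qGoodAbs (map_option (qSwapAbs zs a b) (binp i)) = pred_option qGoodAbs (binp i)" for i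
      using Op(2)[of i] by (cases "binp i") auto
    then show ?thesis by simp
  qed
  show ?case using 1 2 by simp
qed auto

lemma qSwap_conj:
  fixes X :: "('index,'bindex,'varSort,'var,'opSym) qTerm"
    and A :: "('index,'bindex,'varSort,'var,'opSym) qAbs"
  shows "qSwap zs a b (qSwap xs y x X) = qSwap xs (sw zs a b xs y) (sw zs a b xs x) (qSwap zs a b X)"
    "qSwapAbs zs a b (qSwapAbs xs y x A) = qSwapAbs xs (sw zs a b xs y) (sw zs a b xs x) (qSwapAbs zs a b A)"
proof (induct X and A rule: qT_induct qA_induct)
  case (Var s v)
  then show ?case by (simp only: qSwap.simps sw_conj[of zs a b _ xs y x])
next
  case (Op d inp binp)
  then show ?case by (auto simp: option.map_comp intro!: ext map_option_cong2)
next
  case (Abs xs' x' X')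
  then show ?case by (simp only: qSwapAbs.simps qSwap.simps sw_conj[of zs a b _ xs y x])
qed


lemma qSwap_absent:
  fixes X :: "('index,'bindex,'varSort,'var,'opSym) qTerm"
    and A :: "('index,'bindex,'varSort,'var,'opSym) qAbs"
  shows "qAFresh xs y X \<Longrightarrow> qAFresh xs z X \<Longrightarrow> qSwap xs z y (qSwap xs y x X) = qSwap xs z x X"
    "qAFreshAbs xs y A \<Longrightarrow> qAFreshAbs xs z A \<Longrightarrow> qSwapAbs xs z y (qSwapAbs xs y x A) = qSwapAbs xs z x A"
  by (induct X and A rule: qT_induct qA_induct)
     (auto simp: option.map_comp sw_def pred_option_iff intro!: ext map_option_cong2)


lemma qSwap_fresh_id:
  fixes X :: "('index,'bindex,'varSort,'var,'opSym) qTerm"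
    and A :: "('index,'bindex,'varSort,'var,'opSym) qAbs"
  shows "qAFresh xs x X \<Longrightarrow> qAFresh xs y X \<Longrightarrow> qSwap xs x y X = X"
    "qAFreshAbs xs x A \<Longrightarrow> qAFreshAbs xs y A \<Longrightarrow> qSwapAbs xs x y A = A"
  by (induct X and A rule: qT_induct qA_induct)
     (auto simp: sw_def pred_option_iff intro!: ext map_option_id_cong)

section \<open>Alpha-equivalence basics\<close>

lemma dom_eq_from_None: "\<forall>i. (f i = None) = (g i = None) \<Longrightarrow> dom f = dom g"
  by (simp add: dom_def)

lemma opt_rel_pred:
  "(f = None) = (g = None) \<Longrightarrow> (\<And>X X'. f = Some X \<Longrightarrow> g = Some X' \<Longrightarrow> P X = Q X')
   \<Longrightarrow> pred_option P f = pred_option Q g"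
  by (cases f; cases g) auto

lemma alpha_qGood:
  fixes X :: "('index,'bindex,'varSort,'var,'opSym) qTerm"
    and A :: "('index,'bindex,'varSort,'var,'opSym) qAbs"
  shows "alpha X Y \<Longrightarrow> qGood X = qGood Y" "alphaAbs A B \<Longrightarrow> qGoodAbs A = qGoodAbs B"
proof (induct rule: alpha_alphaAbs.inducts)
  case (alpha_Op inp inp' binp binp' d)
  have d: "dom inp = dom inp'" "dom binp = dom binp'"
    using dom_eq_from_None[OF alpha_Op(1)] dom_eq_from_None[OF alpha_Op(2)] by simp_all
  have 1: "(\<forall>i. pred_option qGood (inp i)) = (\<forall>i. pred_option qGood (inp' i))"
  proof -
    have "pred_option qGood (inp i) = pred_option qGood (inp' i)" for i
      using alpha_Op(1)[rule_format, of i] alpha_Op(3)[rule_format, of i] by (intro opt_rel_pred) auto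
    then show ?thesis by simp
  qed
  have 2: "(\<forall>i. pred_option qGoodAbs (binp i)) = (\<forall>i. pred_option qGoodAbs (binp' i))"
  proof -
    have "pred_option qGoodAbs (binp i) = pred_option qGoodAbs (binp' i)" for i
      using alpha_Op(2)[rule_format, of i] alpha_Op(4)[rule_format, of i] by (intro opt_rel_pred) auto
    then show ?thesis by simp
  qed
  show ?case using 1 2 d by simp
next
  case (alpha_Var xs x) show ?case by (rule refl)
next
  case (alphaAbs_Abs y x x' xs X X')
  then show ?case by simp
qed

lemma alpha_qSwap:
  fixes X :: "('index,'bindex,'varSort,'var,'opSym) qTerm"
    and A :: "('index,'bindex,'varSort,'var,'opSym) qAbs"
  shows "alpha X Y \<Longrightarrow> alpha (qSwap zs a b X) (qSwap zs a b Y)"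
    "alphaAbs A B \<Longrightarrow> alphaAbs (qSwapAbs zs a b A) (qSwapAbs zs a b B)"
proof (induct rule: alpha_alphaAbs.inducts)
  case (alpha_Var xs x)
  then show ?case by (auto intro: alpha_alphaAbs.alpha_Var)
next
  case (alpha_Op inp inp' binp binp' d)
  show ?case unfolding qSwap.simps
  proof (rule alpha_alphaAbs.alpha_Op)
    show "\<forall>i. (map_option (qSwap zs a b) (inp i) = None) = (map_option (qSwap zs a b) (inp' i) = None)"
      "\<forall>i. (map_option (qSwapAbs zs a b) (binp i) = None) = (map_option (qSwapAbs zs a b) (binp' i) = None)"
      using alpha_Op(1,2) by simp_all
    show "\<forall>i X X'. map_option (qSwap zs a b) (inp i) = Some X \<and> map_option (qSwap zs a b) (inp' i) = Some X' \<longrightarrow> alpha X X'"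
    proof (intro allI impI, elim conjE)
      fix i X X' assume "map_option (qSwap zs a b) (inp i) = Some X" "map_option (qSwap zs a b) (inp' i) = Some X'"
      then obtain X0 X0' where "inp i = Some X0" "X = qSwap zs a b X0" "inp' i = Some X0'" "X' = qSwap zs a b X0'"
        by auto
      then show "alpha X X'" using alpha_Op(3)[rule_format, of i X0 X0'] by simp
    qed
    show "\<forall>i X X'. map_option (qSwapAbs zs a b) (binp i) = Some X \<and> map_option (qSwapAbs zs a b) (binp' i) = Some X' \<longrightarrow> alphaAbs X X'"
    proof (intro allI impI, elim conjE)
      fix i X X' assume "map_option (qSwapAbs zs a b) (binp i) = Some X" "map_option (qSwapAbs zs a b) (binp' i) = Some X'"
      then obtain X0 X0' where "binp i = Some X0" "X = qSwapAbs zs a b X0" "binp' i = Some X0'" "X' = qSwapAbs zs a b X0'"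
        by auto
      then show "alphaAbs X X'" using alpha_Op(4)[rule_format, of i X0 X0'] by simp
    qed
  qed
next
  case (alphaAbs_Abs y x x' xs X X')
  show ?case unfolding qSwapAbs.simps
  proof (rule alpha_alphaAbs.alphaAbs_Abs[where y = "sw zs a b xs y"])
    show "sw zs a b xs y \<noteq> sw zs a b xs x" "sw zs a b xs y \<noteq> sw zs a b xs x'"
      using alphaAbs_Abs by auto
    show "qAFresh xs (sw zs a b xs y) (qSwap zs a b X)" "qAFresh xs (sw zs a b xs y) (qSwap zs a b X')"
      using alphaAbs_Abs by (auto simp: qAFresh_qSwap)
    show "alpha (qSwap xs (sw zs a b xs y) (sw zs a b xs x) (qSwap zs a b X))
        (qSwap xs (sw zs a b xs y) (sw zs a b xs x') (qSwap zs a b X'))"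
      using alphaAbs_Abs(6) unfolding qSwap_conj(1)[of zs a b xs y x X] qSwap_conj(1)[of zs a b xs y x' X'] .
  qed
qed

lemma alpha_sym:
  fixes X :: "('index,'bindex,'varSort,'var,'opSym) qTerm"
    and A :: "('index,'bindex,'varSort,'var,'opSym) qAbs"
  shows "alpha X Y \<Longrightarrow> alpha Y X" "alphaAbs A B \<Longrightarrow> alphaAbs B A"
proof (induct rule: alpha_alphaAbs.inducts)
  case (alpha_Var xs x)
  then show ?case by (auto intro: alpha_alphaAbs.alpha_Var)
next
  case (alpha_Op inp inp' binp binp' d)
  show ?case
  proof (rule alpha_alphaAbs.alpha_Op)
    show "\<forall>i. (inp' i = None) = (inp i = None)" "\<forall>i. (binp' i = None) = (binp i = None)"
      using alpha_Op(1,2) by simp_all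
    show "\<forall>i X X'. inp' i = Some X \<and> inp i = Some X' \<longrightarrow> alpha X X'"
    proof (intro allI impI, elim conjE)
      fix i X X' assume "inp' i = Some X" "inp i = Some X'"
      then show "alpha X X'" using alpha_Op(3)[rule_format, of i X' X] by simp
    qed
    show "\<forall>i X X'. binp' i = Some X \<and> binp i = Some X' \<longrightarrow> alphaAbs X X'"
    proof (intro allI impI, elim conjE)
      fix i X X' assume "binp' i = Some X" "binp i = Some X'"
      then show "alphaAbs X X'" using alpha_Op(4)[rule_format, of i X' X] by simp
    qed
  qed
next
  case (alphaAbs_Abs y x x' xs X X')
  then show ?case by (auto intro!: alpha_alphaAbs.alphaAbs_Abs)
qed

lemma alpha_rename:
  assumes "y \<noteq> x" "y \<noteq> x'" "qAFresh xs y X" "qAFresh xs y X'"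
    "alpha (qSwap xs y x X) (qSwap xs y x' X')"
    "qAFresh xs z X" "qAFresh xs z X'"
  shows "alpha (qSwap xs z x X) (qSwap xs z x' X')"
  using alpha_qSwap(1)[OF assms(5), of xs z y] assms by (simp add: qSwap_absent)

lemma alpha_qVar_inv: "alpha (qVar xs x) Y \<Longrightarrow> Y = qVar xs x"
  by (erule alpha.cases) auto

lemma alpha_qOp_inv: "alpha (qOp d inp binp) Y \<Longrightarrow> \<exists>inp' binp'. Y = qOp d inp' binp' \<and>
  (\<forall>i. (inp i = None) = (inp' i = None)) \<and> (\<forall>i. (binp i = None) = (binp' i = None)) \<and>
  (\<forall>i X X'. inp i = Some X \<and> inp' i = Some X' \<longrightarrow> alpha X X') \<and>
  (\<forall>i A A'. binp i = Some A \<and> binp' i = Some A' \<longrightarrow> alphaAbs A A')"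
  by (erule alpha.cases) auto

lemma alphaAbs_inv: "alphaAbs (qAbs xs x X) B \<Longrightarrow> \<exists>y x' X'. B = qAbs xs x' X' \<and>
  y \<noteq> x \<and> y \<noteq> x' \<and> qAFresh xs y X \<and> qAFresh xs y X' \<and> alpha (qSwap xs y x X) (qSwap xs y x' X')"
  by (erule alphaAbs.cases) auto

primrec swL :: "('varSort \<times> 'var \<times> 'var) list \<Rightarrow> 'varSort \<Rightarrow> 'var \<Rightarrow> 'var" where
  "swL [] s v = v"
| "swL (t # l) s v = (case t of (zs, a, b) \<Rightarrow> sw zs a b s (swL l s v))"

primrec qSwapL where
  "qSwapL [] X = X"
| "qSwapL (t # l) X = (case t of (zs, a, b) \<Rightarrow> qSwap zs a b (qSwapL l X))"

primrec qSwapLAbs where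
  "qSwapLAbs [] X = X"
| "qSwapLAbs (t # l) X = (case t of (zs, a, b) \<Rightarrow> qSwapAbs zs a b (qSwapLAbs l X))"

lemma qSwapL_fun[simp]: "qSwapL [] = id" "qSwapL ((a,b,c) # l) = qSwap a b c \<circ> qSwapL l"
  "qSwapLAbs [] = id" "qSwapLAbs ((a,b,c) # l) = qSwapAbs a b c \<circ> qSwapLAbs l"
  by (auto simp: fun_eq_iff)

lemma qSwapL_simps[simp]:
  "qSwapL l (qVar xs x) = qVar xs (swL l xs x)"
  "qSwapL l (qOp d inp binp) = qOp d (\<lambda>i. map_option (qSwapL l) (inp i)) (\<lambda>i. map_option (qSwapLAbs l) (binp i))"
  "qSwapLAbs l (qAbs xs x X) = qAbs xs (swL l xs x) (qSwapL l X)"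
  by (induct l) (auto simp: option.map_comp option.map_id split: prod.splits)

lemma qGood_qSwapL[simp]:
  "qGood (qSwapL l X) = qGood X" "qGoodAbs (qSwapLAbs l A) = qGoodAbs A"
  by (induct l) (auto split: prod.splits)

context VV begin

lemma good_fresh:
  fixes X :: "('index,'bindex,'varSort,'var,'opSym) qTerm"
  assumes "qGood X" shows "|{(xs, x). \<not> qAFresh xs x X}| <o |UNIV :: 'var set|"
  using qGood_qVars(1)[OF assms] by (simp add: qVars_def)

lemma fresh_avoid:
  assumes "|S| <o |UNIV :: 'var set|" "finite F"
  shows "\<exists>y::'var. (xs, y) \<notin> S \<and> y \<notin> F"
proof -
  have "|S \<union> Pair xs ` F| <o |UNIV :: 'var set|"
    using Un_less_inf[OF var_inf assms(1) finite_less_inf[OF _ var_inf]] assms(2) by auto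
  from exists_fresh_pair[OF this, of xs] show ?thesis by auto
qed

lemma fresh2:
  fixes X X' :: "('index,'bindex,'varSort,'var,'opSym) qTerm"
  assumes "qGood X" "qGood X'" "finite F"
  shows "\<exists>y. qAFresh xs y X \<and> qAFresh xs y X' \<and> y \<notin> F"
proof -
  have "|qVars X \<union> qVars X'| <o |UNIV :: 'var set|"
    using Un_less_inf[OF var_inf qGood_qVars(1)[OF assms(1)] qGood_qVars(1)[OF assms(2)]] .
  from fresh_avoid[OF this assms(3)] show ?thesis by (auto simp: qAFresh_qVars)
qed

lemma fresh3:
  fixes X X' X'' :: "('index,'bindex,'varSort,'var,'opSym) qTerm"
  assumes "qGood X" "qGood X'" "qGood X''" "finite F"
  shows "\<exists>y. qAFresh xs y X \<and> qAFresh xs y X' \<and> qAFresh xs y X'' \<and> y \<notin> F"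
proof -
  have "|qVars X \<union> qVars X' \<union> qVars X''| <o |UNIV :: 'var set|"
    using Un_less_inf[OF var_inf Un_less_inf[OF var_inf qGood_qVars(1)[OF assms(1)] qGood_qVars(1)[OF assms(2)]]
        qGood_qVars(1)[OF assms(3)]] .
  from fresh_avoid[OF this assms(4)] show ?thesis by (auto simp: qAFresh_qVars)
qed

lemma alpha_refl:
  fixes X :: "('index,'bindex,'varSort,'var,'opSym) qTerm"
    and A :: "('index,'bindex,'varSort,'var,'opSym) qAbs"
  shows "qGood X \<Longrightarrow> alpha X X" "qGoodAbs A \<Longrightarrow> alphaAbs A A"
proof (induct X and A rule: qT_induct qA_induct)
  case (Var xs x)
  show ?case by (rule alpha_alphaAbs.alpha_Var)
next
  case (Op d inp binp)
  then show ?case by (auto simp: pred_option_iff intro!: alpha_alphaAbs.alpha_Op)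
next
  case (Abs xs x X)
  obtain y where y: "qAFresh xs y X" "y \<notin> {x}" using fresh2[of X X "{x}" xs] Abs by auto
  show ?case using y Abs by (auto intro!: alpha_alphaAbs.alphaAbs_Abs[where y = y] alpha_qSwap)
qed

lemma alpha_trans_aux:
  fixes X :: "('index,'bindex,'varSort,'var,'opSym) qTerm"
    and A :: "('index,'bindex,'varSort,'var,'opSym) qAbs"
  shows "qGood X \<Longrightarrow> \<forall>l Y Z. alpha (qSwapL l X) Y \<longrightarrow> alpha Y Z \<longrightarrow> alpha (qSwapL l X) Z"
    "qGoodAbs A \<Longrightarrow> \<forall>l B C. alphaAbs (qSwapLAbs l A) B \<longrightarrow> alphaAbs B C \<longrightarrow> alphaAbs (qSwapLAbs l A) C"
proof (induct X and A rule: qT_induct qA_induct)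
  case (Var xs x)
  show ?case
  proof (intro allI impI)
    fix l Y Z assume "alpha (qSwapL l (qVar xs x)) Y" "alpha Y Z"
    then show "alpha (qSwapL l (qVar xs x)) Z" using alpha_qVar_inv[of xs "swL l xs x" Y] by simp
  qed
next
  case (Op d inp binp)
  show ?case
  proof (intro allI impI)
    fix l Y Z
    assume a1: "alpha (qSwapL l (qOp d inp binp)) Y" and a2: "alpha Y Z"
    from a1 obtain inp2 binp2 where Y: "Y = qOp d inp2 binp2"
      and d1: "\<forall>i. (map_option (qSwapL l) (inp i) = None) = (inp2 i = None)"
      "\<forall>i. (map_option (qSwapLAbs l) (binp i) = None) = (binp2 i = None)"
      and r1: "\<forall>i X X'. map_option (qSwapL l) (inp i) = Some X \<and> inp2 i = Some X' \<longrightarrow> alpha X X'"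
      "\<forall>i A A'. map_option (qSwapLAbs l) (binp i) = Some A \<and> binp2 i = Some A' \<longrightarrow> alphaAbs A A'"
      using alpha_qOp_inv[OF a1[unfolded qSwapL_simps]] by blast
    from a2[unfolded Y] obtain inp3 binp3 where Z: "Z = qOp d inp3 binp3"
      and d2: "\<forall>i. (inp2 i = None) = (inp3 i = None)" "\<forall>i. (binp2 i = None) = (binp3 i = None)"
      and r2: "\<forall>i X X'. inp2 i = Some X \<and> inp3 i = Some X' \<longrightarrow> alpha X X'"
      "\<forall>i A A'. binp2 i = Some A \<and> binp3 i = Some A' \<longrightarrow> alphaAbs A A'"
      using alpha_qOp_inv[OF a2[unfolded Y]] by blast
    have gi: "\<And>i X. inp i = Some X \<Longrightarrow> qGood X" "\<And>i A. binp i = Some A \<Longrightarrow> qGoodAbs A"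
      using Op(3) by (auto simp: pred_option_iff)
    show "alpha (qSwapL l (qOp d inp binp)) Z"
      unfolding Z qSwapL_simps
    proof (rule alpha_alphaAbs.alpha_Op)
      show "\<forall>i. (map_option (qSwapL l) (inp i) = None) = (inp3 i = None)"
        "\<forall>i. (map_option (qSwapLAbs l) (binp i) = None) = (binp3 i = None)"
        using d1 d2 by auto
      show "\<forall>i X X'. map_option (qSwapL l) (inp i) = Some X \<and> inp3 i = Some X' \<longrightarrow> alpha X X'"
      proof (intro allI impI, elim conjE)
        fix i X1 X3 assume "map_option (qSwapL l) (inp i) = Some X1" "inp3 i = Some X3"
        then obtain X0 X2 where "inp i = Some X0" "X1 = qSwapL l X0" "inp2 i = Some X2"
          using d2(1)[rule_format, of i] by (cases "inp2 i") auto
        then show "alpha X1 X3" using Op(1)[rule_format, of i X0 l X2 X3] gi(1)[of i X0] r1(1)[rule_format, of i X1 X2]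
            r2(1)[rule_format, of i X2 X3] \<open>inp3 i = Some X3\<close> by simp
      qed
      show "\<forall>i X X'. map_option (qSwapLAbs l) (binp i) = Some X \<and> binp3 i = Some X' \<longrightarrow> alphaAbs X X'"
      proof (intro allI impI, elim conjE)
        fix i X1 X3 assume "map_option (qSwapLAbs l) (binp i) = Some X1" "binp3 i = Some X3"
        then obtain X0 X2 where "binp i = Some X0" "X1 = qSwapLAbs l X0" "binp2 i = Some X2"
          using d2(2)[rule_format, of i] by (cases "binp2 i") auto
        then show "alphaAbs X1 X3" using Op(2)[rule_format, of i X0 l X2 X3] gi(2)[of i X0] r1(2)[rule_format, of i X1 X2]
            r2(2)[rule_format, of i X2 X3] \<open>binp3 i = Some X3\<close> by simp
      qed
    qed
  qed
next
  case (Abs xs x W)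
  show ?case
  proof (intro allI impI)
    fix l B C
    assume a1: "alphaAbs (qSwapLAbs l (qAbs xs x W)) B" and a2: "alphaAbs B C"
    define x1 where "x1 = swL l xs x"
    define W1 where "W1 = qSwapL l W"
    from a1 obtain y1 x' W' where B: "B = qAbs xs x' W'" and y1: "y1 \<noteq> x1" "y1 \<noteq> x'"
      "qAFresh xs y1 W1" "qAFresh xs y1 W'" "alpha (qSwap xs y1 x1 W1) (qSwap xs y1 x' W')"
      using alphaAbs_inv[OF a1[unfolded qSwapL_simps x1_def[symmetric] W1_def[symmetric]]] by blast
    from a2[unfolded B] obtain y2 x'' W'' where C: "C = qAbs xs x'' W''" and y2: "y2 \<noteq> x'" "y2 \<noteq> x''"
      "qAFresh xs y2 W'" "qAFresh xs y2 W''" "alpha (qSwap xs y2 x' W') (qSwap xs y2 x'' W'')"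
      using alphaAbs_inv[OF a2[unfolded B]] by blast
    have g1: "qGood W1" using Abs by (simp add: W1_def)
    have g2: "qGood W'" using alpha_qGood(1)[OF y1(5)] g1 by simp
    have g3: "qGood W''" using alpha_qGood(1)[OF y2(5)] g2 by simp
    obtain z where z: "qAFresh xs z W1" "qAFresh xs z W'" "qAFresh xs z W''" "z \<notin> {x1, x', x''}"
      using fresh3[OF g1 g2 g3, of "{x1, x', x''}" xs] by auto
    have s1: "alpha (qSwap xs z x1 W1) (qSwap xs z x' W')"
      using alpha_rename[OF y1 z(1,2)] .
    have s2: "alpha (qSwap xs z x' W') (qSwap xs z x'' W'')"
      using alpha_rename[OF y2 z(2,3)] .
    have e: "qSwap xs z x1 W1 = qSwapL ((xs, z, x1) # l) W" by (simp add: W1_def)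
    have s3: "alpha (qSwap xs z x1 W1) (qSwap xs z x'' W'')"
      using Abs(1)[rule_format, of "(xs, z, x1) # l"] Abs(2) s1 s2 unfolding e by auto
    show "alphaAbs (qSwapLAbs l (qAbs xs x W)) C"
      unfolding C qSwapL_simps x1_def[symmetric] W1_def[symmetric]
      using z s3 by (auto intro!: alpha_alphaAbs.alphaAbs_Abs[where y = z])
  qed
qed

lemma alpha_trans:
  fixes X :: "('index,'bindex,'varSort,'var,'opSym) qTerm"
    and A :: "('index,'bindex,'varSort,'var,'opSym) qAbs"
  shows "qGood X \<Longrightarrow> alpha X Y \<Longrightarrow> alpha Y Z \<Longrightarrow> alpha X Z"
  "qGoodAbs A \<Longrightarrow> alphaAbs A B \<Longrightarrow> alphaAbs B C \<Longrightarrow> alphaAbs A C"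
  using alpha_trans_aux(1)[of X] alpha_trans_aux(2)[of A]
  by (metis qSwapL.simps(1), metis qSwapLAbs.simps(1))

lemma equivclp_alpha:
  fixes X :: "('index,'bindex,'varSort,'var,'opSym) qTerm"
  assumes "equivclp alpha X Y" "qGood X" shows "alpha X Y"
  using assms(1) unfolding equivclp_def
proof (induct rule: rtranclp_induct)
  case base then show ?case using alpha_refl(1)[OF assms(2)] by simp
next
  case (step Y Z)
  have "qGood Y" using alpha_qGood(1)[OF step(3)] assms(2) by simp
  from step(2) have "alpha Y Z" using alpha_sym(1) by (auto simp: symclp_def)
  then show ?case using alpha_trans(1)[OF assms(2) step(3)] by blast
qed

lemma equivclp_alphaAbs:
  fixes A :: "('index,'bindex,'varSort,'var,'opSym) qAbs"
  assumes "equivclp alphaAbs A B" "qGoodAbs A" shows "alphaAbs A B"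
  using assms(1) unfolding equivclp_def
proof (induct rule: rtranclp_induct)
  case base then show ?case using alpha_refl(2)[OF assms(2)] by simp
next
  case (step Y Z)
  from step(2) have "alphaAbs Y Z" using alpha_sym(2) by (auto simp: symclp_def)
  then show ?case using alpha_trans(2)[OF assms(2) step(3)] by blast
qed

lemma alphaAbs_cong:
  fixes W :: "('index,'bindex,'varSort,'var,'opSym) qTerm"
  assumes "qGood W" "alpha W W'"
  shows "alphaAbs (qAbs xs x W) (qAbs xs x W')"
proof -
  have g: "qGood W'" using alpha_qGood(1)[OF assms(2)] assms(1) by simp
  obtain y where "qAFresh xs y W" "qAFresh xs y W'" "y \<notin> {x}" using fresh2[OF assms(1) g, of "{x}" xs] by auto
  then show ?thesis using assms(2) by (auto intro!: alpha_alphaAbs.alphaAbs_Abs[where y = y] alpha_qSwap)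
qed

end

locale FS = VV "TYPE('var)" +
  fixes VAR :: "'varSort \<Rightarrow> 'var \<Rightarrow> 'T"
    and OP :: "'opSym \<Rightarrow> ('index \<Rightarrow> 'T option) \<Rightarrow> ('bindex \<Rightarrow> 'A option) \<Rightarrow> 'T"
    and ABS :: "'varSort \<Rightarrow> 'var \<Rightarrow> 'T \<Rightarrow> 'A"
    and FRESH :: "'varSort \<Rightarrow> 'var \<Rightarrow> 'T \<Rightarrow> bool"
    and FRESHABS :: "'varSort \<Rightarrow> 'var \<Rightarrow> 'A \<Rightarrow> bool"
    and SUBST :: "'T \<Rightarrow> 'T \<Rightarrow> 'var \<Rightarrow> 'varSort \<Rightarrow> 'T"
    and SUBSTABS :: "'A \<Rightarrow> 'T \<Rightarrow> 'var \<Rightarrow> 'varSort \<Rightarrow> 'A"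
  assumes model: "FSmodel VAR OP ABS FRESH FRESHABS SUBST SUBSTABS"
begin

lemmas M = model[unfolded FSmodel_def]

lemma F1: "(ys, y) \<noteq> (xs, x) \<Longrightarrow> FRESH ys y (VAR xs x)"
  by (rule M[THEN conjunct1, rule_format]; auto)

lemma F2: "|dom inp| <o |UNIV :: 'var set| \<Longrightarrow> |dom binp| <o |UNIV :: 'var set| \<Longrightarrow>
  liftAll (FRESH ys y) inp \<Longrightarrow> liftAll (FRESHABS ys y) binp \<Longrightarrow> FRESH ys y (OP d inp binp)"
  by (rule M[THEN conjunct2, THEN conjunct1, rule_format]; auto)

lemma F3: "(ys, y) = (xs, x) \<or> FRESH ys y X \<Longrightarrow> FRESHABS ys y (ABS xs x X)"
  by (rule M[THEN conjunct2, THEN conjunct2, THEN conjunct1, rule_format]; auto)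

lemma S1: "SUBST (VAR xs x) Y y ys = (if (xs, x) = (ys, y) then Y else VAR xs x)"
  by (rule M[THEN conjunct2, THEN conjunct2, THEN conjunct2, THEN conjunct1, rule_format]; auto)

lemma S2: "|dom inp| <o |UNIV :: 'var set| \<Longrightarrow> |dom binp| <o |UNIV :: 'var set| \<Longrightarrow>
  SUBST (OP d inp binp) Y y ys = OP d (lift (\<lambda>X. SUBST X Y y ys) inp) (lift (\<lambda>A. SUBSTABS A Y y ys) binp)"
  by (rule M[THEN conjunct2, THEN conjunct2, THEN conjunct2, THEN conjunct2, THEN conjunct1, rule_format]; auto)

lemma S3: "(xs, x) \<noteq> (ys, y) \<Longrightarrow> FRESH xs x Y \<Longrightarrow> SUBSTABS (ABS xs x X) Y y ys = ABS xs x (SUBST X Y y ys)"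
  by (rule M[THEN conjunct2, THEN conjunct2, THEN conjunct2, THEN conjunct2, THEN conjunct2, THEN conjunct1, rule_format]; auto)

lemma R1: "y \<notin> {x, x'} \<Longrightarrow> FRESH xs y X \<Longrightarrow> FRESH xs y X' \<Longrightarrow>
  SUBST X (VAR xs y) x xs = SUBST X' (VAR xs y) x' xs \<Longrightarrow> ABS xs x X = ABS xs x' X'"
  by (rule M[THEN conjunct2, THEN conjunct2, THEN conjunct2, THEN conjunct2, THEN conjunct2, THEN conjunct2, THEN conjunct1, rule_format]; auto)

lemma R2: "FRESH xs y X \<Longrightarrow> ABS xs x X = ABS xs y (SUBST X (VAR xs y) x xs)"
  by (rule M[THEN conjunct2, THEN conjunct2, THEN conjunct2, THEN conjunct2, THEN conjunct2, THEN conjunct2, THEN conjunct2, rule_format]; auto)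

primrec qf :: "('index,'bindex,'varSort,'var,'opSym) qTerm \<Rightarrow> 'T"
  and qfAbs :: "('index,'bindex,'varSort,'var,'opSym) qAbs \<Rightarrow> 'A" where
  "qf (qVar xs x) = VAR xs x"
| "qf (qOp d inp binp) = OP d (\<lambda>i. map_option qf (inp i)) (\<lambda>i. map_option qfAbs (binp i))"
| "qfAbs (qAbs xs x X) = ABS xs x (qf X)"

lemma good_Op_dest:
  fixes inp :: "'index \<Rightarrow> ('index,'bindex,'varSort,'var,'opSym) qTerm option"
    and binp :: "'bindex \<Rightarrow> ('index,'bindex,'varSort,'var,'opSym) qAbs option"
  assumes "qGood (qOp d inp binp)"
  shows "\<And>i X. inp i = Some X \<Longrightarrow> qGood X" "\<And>i A. binp i = Some A \<Longrightarrow> qGoodAbs A"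
    "|dom inp| <o |UNIV :: 'var set|" "|dom binp| <o |UNIV :: 'var set|"
  using assms by (auto simp: pred_option_iff)

lemma S2': "|dom inp| <o |UNIV :: 'var set| \<Longrightarrow> |dom binp| <o |UNIV :: 'var set| \<Longrightarrow>
  SUBST (OP d (\<lambda>i. map_option qf (inp i)) (\<lambda>i. map_option qfAbs (binp i))) Y y ys =
  OP d (\<lambda>i. map_option (\<lambda>X. SUBST (qf X) Y y ys) (inp i)) (\<lambda>i. map_option (\<lambda>A. SUBSTABS (qfAbs A) Y y ys) (binp i))"
  by (subst S2) (simp_all add: lift_def option.map_comp o_def)

lemma qFresh_FRESH:
  fixes X :: "('index,'bindex,'varSort,'var,'opSym) qTerm"
    and A :: "('index,'bindex,'varSort,'var,'opSym) qAbs"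
  shows "qGood X \<Longrightarrow> qFresh xs x X \<Longrightarrow> FRESH xs x (qf X)"
    "qGoodAbs A \<Longrightarrow> qFreshAbs xs x A \<Longrightarrow> FRESHABS xs x (qfAbs A)"
proof (induct X and A rule: qT_induct qA_induct)
  case (Var ys y)
  then show ?case using F1 by auto
next
  case (Op d inp binp)
  note g = good_Op_dest[OF Op(3)]
  show ?case unfolding qf.simps
  proof (rule F2)
    show "|dom (\<lambda>i. map_option qf (inp i))| <o |UNIV :: 'var set|"
      "|dom (\<lambda>i. map_option qfAbs (binp i))| <o |UNIV :: 'var set|" using g by simp_all
    show "liftAll (FRESH xs x) (\<lambda>i. map_option qf (inp i))"
      unfolding liftAll_def using Op(1) g(1) Op(4) by (auto simp: pred_option_iff)
    show "liftAll (FRESHABS xs x) (\<lambda>i. map_option qfAbs (binp i))"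
      unfolding liftAll_def using Op(2) g(2) Op(4) by (auto simp: pred_option_iff)
  qed
next
  case (Abs ys y X)
  then show ?case using F3 by auto
qed

lemma qAFresh_FRESH: "qGood X \<Longrightarrow> qAFresh xs x X \<Longrightarrow> FRESH xs x (qf X)"
  by (rule qFresh_FRESH(1)[OF _ qAFresh_qFresh(1)])

lemma subst_absent:
  fixes Z :: "('index,'bindex,'varSort,'var,'opSym) qTerm"
    and A :: "('index,'bindex,'varSort,'var,'opSym) qAbs"
  shows "qGood Z \<Longrightarrow> qAFresh xs x Z \<Longrightarrow> qAFresh xs y Z \<Longrightarrow> SUBST (qf Z) (VAR xs y) x xs = qf Z"
    "qGoodAbs A \<Longrightarrow> qAFreshAbs xs x A \<Longrightarrow> qAFreshAbs xs y A \<Longrightarrow> SUBSTABS (qfAbs A) (VAR xs y) x xs = qfAbs A"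
proof (induct Z and A rule: qT_induct qA_induct)
  case (Var zs z)
  then show ?case by (auto simp: S1)
next
  case (Op d inp binp)
  note g = good_Op_dest[OF Op(3)]
  show ?case unfolding qf.simps S2'[OF g(3,4)]
  proof (intro arg_cong2[where f = "OP d"] ext map_option_cong2)
    fix i X assume "inp i = Some X"
    then show "SUBST (qf X) (VAR xs y) x xs = qf X" using Op(1) g(1) Op(4,5) by (auto simp: pred_option_iff)
  next
    fix i A assume "binp i = Some A"
    then show "SUBSTABS (qfAbs A) (VAR xs y) x xs = qfAbs A" using Op(2) g(2) Op(4,5) by (auto simp: pred_option_iff)
  qed
next
  case (Abs zs z W)
  then show ?case by (auto simp: S3 F1)
qed

lemma swap_SUBST:
  fixes X :: "('index,'bindex,'varSort,'var,'opSym) qTerm"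
    and A :: "('index,'bindex,'varSort,'var,'opSym) qAbs"
  shows "qGood X \<Longrightarrow> \<forall>y. qAFresh xs y X \<longrightarrow> qf (qSwap xs y x X) = SUBST (qf X) (VAR xs y) x xs"
    "qGoodAbs A \<Longrightarrow> \<forall>y. qAFreshAbs xs y A \<longrightarrow> qfAbs (qSwapAbs xs y x A) = SUBSTABS (qfAbs A) (VAR xs y) x xs"
proof (induct X and A rule: qT_induct qA_induct)
  case (Var zs z)
  then show ?case by (auto simp: S1 sw_def)
next
  case (Op d inp binp)
  note g = good_Op_dest[OF Op(3)]
  show ?case
  proof (intro allI impI)
    fix y assume fy: "qAFresh xs y (qOp d inp binp)"
    show "qf (qSwap xs y x (qOp d inp binp)) = SUBST (qf (qOp d inp binp)) (VAR xs y) x xs"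
      unfolding qf.simps S2'[OF g(3,4)] qSwap.simps option.map_comp o_def
    proof (intro arg_cong2[where f = "OP d"] ext map_option_cong2)
      fix i X assume "inp i = Some X"
      then show "qf (qSwap xs y x X) = SUBST (qf X) (VAR xs y) x xs" using Op(1) g(1) fy by (auto simp: pred_option_iff)
    next
      fix i A assume "binp i = Some A"
      then show "qfAbs (qSwapAbs xs y x A) = SUBSTABS (qfAbs A) (VAR xs y) x xs" using Op(2) g(2) fy by (auto simp: pred_option_iff)
    qed
  qed
next
  case (Abs zs z W)
  have gW: "qGood W" using Abs(2) by simp
  show ?case
  proof (intro allI impI)
    fix y assume fy: "qAFreshAbs xs y (qAbs zs z W)"
    hence fyW: "qAFresh xs y W" and yz: "(xs, y) \<noteq> (zs, z)" by auto
    show "qfAbs (qSwapAbs xs y x (qAbs zs z W)) = SUBSTABS (qfAbs (qAbs zs z W)) (VAR xs y) x xs"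
    proof (cases "(zs, z) = (xs, x)")
      case True
      hence zs: "zs = xs" "z = x" by auto
      have yx: "y \<noteq> x" using yz zs by auto
      obtain u where u: "qAFresh xs u W" "u \<notin> {x, y}" using fresh2[OF gW gW, where F="{x, y}" and xs=xs] by auto
      have e1: "qf (qSwap xs u x W) = SUBST (qf W) (VAR xs u) x xs" using Abs(1)[OF gW] u by auto
      have e2: "ABS xs x (qf W) = ABS xs u (qf (qSwap xs u x W))"
        unfolding e1 by (rule R2[OF qAFresh_FRESH[OF gW u(1)]])
      have e3: "SUBST (qf (qSwap xs u x W)) (VAR xs y) x xs = qf (qSwap xs u x W)"
        by (rule subst_absent(1)) (use gW u fyW yx in \<open>auto simp: qAFresh_qSwap sw_def\<close>)
      have e4: "SUBSTABS (ABS xs x (qf W)) (VAR xs y) x xs = ABS xs x (qf W)"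
        unfolding e2 using u e3 by (subst S3) (auto simp: F1)
      have e5: "qf (qSwap xs y x W) = SUBST (qf W) (VAR xs y) x xs" using Abs(1)[OF gW] fyW by auto
      show ?thesis unfolding zs qSwapAbs.simps qfAbs.simps sw_simps e5 e4
        using R2[OF qAFresh_FRESH[OF gW fyW], of x] by simp
    next
      case False
      have sz: "sw xs y x zs z = z" using False yz by (auto simp: sw_def)
      have e5: "qf (qSwap xs y x W) = SUBST (qf W) (VAR xs y) x xs" using Abs(1)[OF gW] fyW by auto
      show ?thesis unfolding qSwapAbs.simps qfAbs.simps sz e5
        using False yz by (subst S3) (auto simp: F1)
    qed
  qed
qed

lemma swap_SUBST':
  "qGood X \<Longrightarrow> qAFresh xs y X \<Longrightarrow> qf (qSwap xs y x X) = SUBST (qf X) (VAR xs y) x xs"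
  using swap_SUBST(1) by simp

lemma opt_rel_map:
  "(f = None) = (g = None) \<Longrightarrow> (\<And>X X'. f = Some X \<Longrightarrow> g = Some X' \<Longrightarrow> h X = h X')
   \<Longrightarrow> map_option h f = map_option h g"
  by (cases f; cases g) auto

lemma alpha_qf:
  fixes X :: "('index,'bindex,'varSort,'var,'opSym) qTerm"
    and A :: "('index,'bindex,'varSort,'var,'opSym) qAbs"
  shows "alpha X Y \<Longrightarrow> qGood X \<longrightarrow> qf X = qf Y" "alphaAbs A B \<Longrightarrow> qGoodAbs A \<longrightarrow> qfAbs A = qfAbs B"
proof (induct rule: alpha_alphaAbs.inducts)
  case (alpha_Var xs x)
  then show ?case by simp
next
  case (alpha_Op inp inp' binp binp' d)
  show ?case
  proof
    assume "qGood (qOp d inp binp)"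
    note g = good_Op_dest[OF this]
    have "map_option qf (inp i) = map_option qf (inp' i)" for i
      using alpha_Op(1)[rule_format, of i] alpha_Op(3)[rule_format, of i] g(1)[of i]
      by (intro opt_rel_map) auto
    moreover have "map_option qfAbs (binp i) = map_option qfAbs (binp' i)" for i
      using alpha_Op(2)[rule_format, of i] alpha_Op(4)[rule_format, of i] g(2)[of i]
      by (intro opt_rel_map) auto
    ultimately show "qf (qOp d inp binp) = qf (qOp d inp' binp')" by simp
  qed
next
  case (alphaAbs_Abs y x x' xs X X')
  show ?case
  proof
    assume "qGoodAbs (qAbs xs x X)"
    hence g: "qGood X" by simp
    have g': "qGood X'" using alpha_qGood(1)[OF alphaAbs_Abs(5)] g by simp
    have "SUBST (qf X) (VAR xs y) x xs = SUBST (qf X') (VAR xs y) x' xs"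
      using swap_SUBST'[OF g alphaAbs_Abs(3), of x] swap_SUBST'[OF g' alphaAbs_Abs(4), of x'] alphaAbs_Abs(6) g
      by simp
    then show "qfAbs (qAbs xs x X) = qfAbs (qAbs xs x' X')"
      using R1[of y x x' xs "qf X" "qf X'"] alphaAbs_Abs(1,2) qAFresh_FRESH[OF g alphaAbs_Abs(3)]
        qAFresh_FRESH[OF g' alphaAbs_Abs(4)] by simp
  qed
qed

lemma subst_absent_gen:
  fixes X :: "('index,'bindex,'varSort,'var,'opSym) qTerm"
    and A :: "('index,'bindex,'varSort,'var,'opSym) qAbs"
  shows "qGood X \<Longrightarrow> \<forall>l zs z (Y :: ('index,'bindex,'varSort,'var,'opSym) qTerm). qGood Y \<longrightarrow> qAFresh zs z (qSwapL l X) \<longrightarrow>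
      SUBST (qf (qSwapL l X)) (qf Y) z zs = qf (qSwapL l X)"
    "qGoodAbs A \<Longrightarrow> \<forall>l zs z (Y :: ('index,'bindex,'varSort,'var,'opSym) qTerm). qGood Y \<longrightarrow> qAFreshAbs zs z (qSwapLAbs l A) \<longrightarrow>
      SUBSTABS (qfAbs (qSwapLAbs l A)) (qf Y) z zs = qfAbs (qSwapLAbs l A)"
proof (induct X and A rule: qT_induct qA_induct)
  case (Var xs x)
  then show ?case by (auto simp: S1)
next
  case (Op d inp binp)
  note g = good_Op_dest[OF Op(3)]
  show ?case
  proof (intro allI impI)
    fix l zs z and Y :: "('index,'bindex,'varSort,'var,'opSym) qTerm"
    assume gY: "qGood Y" and fz: "qAFresh zs z (qSwapL l (qOp d inp binp))"
    have d: "|dom (\<lambda>i. map_option (qSwapL l) (inp i))| <o |UNIV :: 'var set|"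
      "|dom (\<lambda>i. map_option (qSwapLAbs l) (binp i))| <o |UNIV :: 'var set|" using g by simp_all
    show "SUBST (qf (qSwapL l (qOp d inp binp))) (qf Y) z zs = qf (qSwapL l (qOp d inp binp))"
      unfolding qSwapL_simps qf.simps S2'[OF d]
      unfolding option.map_comp o_def
    proof (intro arg_cong2[where f = "OP d"] ext map_option_cong2)
      fix i X assume "inp i = Some X"
      moreover have "pred_option (qAFresh zs z) (map_option (qSwapL l) (inp i))" using fz by simp
      ultimately show "SUBST (qf (qSwapL l X)) (qf Y) z zs = qf (qSwapL l X)"
        using Op(1)[of i X] g(1)[of i X] gY by simp
    next
      fix i A assume "binp i = Some A"
      moreover have "pred_option (qAFreshAbs zs z) (map_option (qSwapLAbs l) (binp i))" using fz by simp
      ultimately show "SUBSTABS (qfAbs (qSwapLAbs l A)) (qf Y) z zs = qfAbs (qSwapLAbs l A)"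
        using Op(2)[of i A] g(2)[of i A] gY by simp
    qed
  qed
next
  case (Abs ws w W)
  have gW: "qGood W" using Abs(2) by simp
  show ?case
  proof (intro allI impI)
    fix l zs z and Y :: "('index,'bindex,'varSort,'var,'opSym) qTerm"
    assume gY: "qGood Y" and fz: "qAFreshAbs zs z (qSwapLAbs l (qAbs ws w W))"
    define w' where "w' = swL l ws w"
    define W' where "W' = qSwapL l W"
    have gW': "qGood W'" using gW by (simp add: W'_def)
    have fz': "(zs, z) \<noteq> (ws, w')" "qAFresh zs z W'" using fz by (auto simp: w'_def W'_def)
    obtain u where u: "qAFresh ws u W'" "qAFresh ws u Y" "u \<notin> {w', z}"
      using fresh2[OF gW' gY, where F = "{w', z}" and xs = ws] by auto
    have e1: "ABS ws w' (qf W') = ABS ws u (qf (qSwap ws u w' W'))"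
      using R2[OF qAFresh_FRESH[OF gW' u(1)], of w'] swap_SUBST'[OF gW' u(1), of w'] by simp
    have e2: "qSwap ws u w' W' = qSwapL ((ws, u, w') # l) W" by (simp add: W'_def)
    have fz2: "qAFresh zs z (qSwapL ((ws, u, w') # l) W)"
      unfolding e2[symmetric] qAFresh_qSwap using fz' u by (auto simp: sw_def)
    have e3: "SUBST (qf (qSwap ws u w' W')) (qf Y) z zs = qf (qSwap ws u w' W')"
      unfolding e2 using Abs(1)[OF gW] gY fz2 by blast
    show "SUBSTABS (qfAbs (qSwapLAbs l (qAbs ws w W))) (qf Y) z zs = qfAbs (qSwapLAbs l (qAbs ws w W))"
      unfolding qSwapL_simps qfAbs.simps w'_def[symmetric] W'_def[symmetric] e1
      using u fz' by (subst S3) (auto simp: e3 qAFresh_FRESH[OF gY])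
  qed
qed

lemma subst_absent': "qGood X \<Longrightarrow> qGood Y \<Longrightarrow> qAFresh zs z X \<Longrightarrow> SUBST (qf X) (qf Y) z zs = qf X"
  using subst_absent_gen(1)[of X] by (metis qSwapL.simps(1))

end

definition supp :: "('varSort \<Rightarrow> 'var \<Rightarrow> 'x option) \<Rightarrow> ('varSort \<times> 'var) set" where
  "supp \<sigma> = {(vs, v). \<sigma> vs v \<noteq> None}"

definition rangeFresh where
  "rangeFresh ws u \<sigma> = (\<forall>vs v S. \<sigma> vs v = Some S \<longrightarrow> qAFresh ws u S)"

definition upd where
  "upd \<sigma> ws w t = \<sigma>(ws := (\<sigma> ws)(w := Some t))"

definition repl where
  "repl \<sigma> as a T = (\<lambda>vs v. map_option (\<lambda>S. if S = qVar as a then T else S) (\<sigma> vs v))"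

definition sigT where
  "sigT \<sigma> ys y T = (\<lambda>vs v. case \<sigma> vs v of None \<Rightarrow> (if (vs, v) = (ys, y) then Some T else None)
     | Some S \<Rightarrow> Some (if S = qVar ys y then T else S))"

definition okS where
  "okS \<sigma> = (finite (supp \<sigma>) \<and> (\<forall>vs v S. \<sigma> vs v = Some S \<longrightarrow> qGood S))"

lemma upd_apply: "upd \<sigma> ws w t vs v = (if (vs, v) = (ws, w) then Some t else \<sigma> vs v)"
  by (auto simp: upd_def)

lemma repl_apply: "repl \<sigma> as a T vs v = map_option (\<lambda>S. if S = qVar as a then T else S) (\<sigma> vs v)"
  by (simp add: repl_def)

lemma sigT_apply: "sigT \<sigma> ys y T vs v = (case \<sigma> vs v of None \<Rightarrow> (if (vs, v) = (ys, y) then Some T else None)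
     | Some S \<Rightarrow> Some (if S = qVar ys y then T else S))"
  by (simp add: sigT_def)

lemma okS_upd: "okS \<sigma> \<Longrightarrow> qGood t \<Longrightarrow> okS (upd \<sigma> ws w t)"
proof -
  assume a: "okS \<sigma>" "qGood t"
  have "supp (upd \<sigma> ws w t) \<subseteq> insert (ws, w) (supp \<sigma>)" by (auto simp: supp_def upd_apply)
  then have "finite (supp (upd \<sigma> ws w t))" using a by (auto simp: okS_def intro: finite_subset)
  then show ?thesis using a by (auto simp: okS_def upd_apply split: if_splits)
qed

lemma okS_repl: "okS \<sigma> \<Longrightarrow> qGood T \<Longrightarrow> okS (repl \<sigma> as a T)"
proof -
  assume a: "okS \<sigma>" "qGood T"
  have "supp (repl \<sigma> as a T) = supp \<sigma>" by (auto simp: supp_def repl_apply)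
  then show ?thesis using a by (auto simp: okS_def repl_apply split: if_splits)
qed

lemma okS_sigT: "okS \<sigma> \<Longrightarrow> qGood T \<Longrightarrow> okS (sigT \<sigma> ys y T)"
proof -
  assume a: "okS \<sigma>" "qGood T"
  have "supp (sigT \<sigma> ys y T) \<subseteq> insert (ys, y) (supp \<sigma>)" by (auto simp: supp_def sigT_apply split: option.splits)
  then have "finite (supp (sigT \<sigma> ys y T))" using a by (auto simp: okS_def intro: finite_subset)
  then show ?thesis using a by (auto simp: okS_def sigT_apply split: if_splits option.splits)
qed

lemma rangeFresh_not_var: "rangeFresh ws u \<sigma> \<Longrightarrow> \<sigma> vs v \<noteq> Some (qVar ws u)"
  unfolding rangeFresh_def by force

lemma okS_empty: "okS (\<lambda>_ _. None)"
  by (simp add: okS_def supp_def)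

lemma qFresh_qPsubst:
  fixes W :: "('index,'bindex,'varSort,'var,'opSym) qTerm"
    and A :: "('index,'bindex,'varSort,'var,'opSym) qAbs"
  shows "\<forall>\<sigma>. (\<forall>ts t. \<not> qFresh ts t W \<longrightarrow> (case \<sigma> ts t of None \<Rightarrow> (ts, t) \<noteq> (xs, v) | Some S \<Rightarrow> qFresh xs v S))
      \<longrightarrow> qFresh xs v (qPsubst \<sigma> W)"
    "\<forall>\<sigma>. (\<forall>ts t. \<not> qFreshAbs ts t A \<longrightarrow> (case \<sigma> ts t of None \<Rightarrow> (ts, t) \<noteq> (xs, v) | Some S \<Rightarrow> qFresh xs v S))
      \<longrightarrow> qFreshAbs xs v (qPsubstAbs \<sigma> A)"
proof (induct W and A rule: qT_induct qA_induct)
  case (Var zs z)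
  show ?case
  proof (intro allI impI)
    fix \<sigma> :: "'varSort \<Rightarrow> 'var \<Rightarrow> ('index,'bindex,'varSort,'var,'opSym) qTerm option"
    assume h: "\<forall>ts t. \<not> qFresh ts t (qVar zs z) \<longrightarrow> (case \<sigma> ts t of None \<Rightarrow> (ts, t) \<noteq> (xs, v) | Some S \<Rightarrow> qFresh xs v S)"
    have "case \<sigma> zs z of None \<Rightarrow> (zs, z) \<noteq> (xs, v) | Some S \<Rightarrow> qFresh xs v S" using h by simp
    then show "qFresh xs v (qPsubst \<sigma> (qVar zs z))" by (cases "\<sigma> zs z") auto
  qed
next
  case (Op d inp binp)
  show ?case
  proof (intro allI impI)
    fix \<sigma> :: "'varSort \<Rightarrow> 'var \<Rightarrow> ('index,'bindex,'varSort,'var,'opSym) qTerm option"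
    assume h: "\<forall>ts t. \<not> qFresh ts t (qOp d inp binp) \<longrightarrow> (case \<sigma> ts t of None \<Rightarrow> (ts, t) \<noteq> (xs, v) | Some S \<Rightarrow> qFresh xs v S)"
    have 1: "qFresh xs v (qPsubst \<sigma> X)" if "inp i = Some X" for i X
    proof -
      have "\<forall>ts t. \<not> qFresh ts t X \<longrightarrow> (case \<sigma> ts t of None \<Rightarrow> (ts, t) \<noteq> (xs, v) | Some S \<Rightarrow> qFresh xs v S)"
      proof (intro allI impI)
        fix ts t assume "\<not> qFresh ts t X"
        then have "\<not> qFresh ts t (qOp d inp binp)" using that by (auto simp: pred_option_iff)
        then show "case \<sigma> ts t of None \<Rightarrow> (ts, t) \<noteq> (xs, v) | Some S \<Rightarrow> qFresh xs v S" using h by blast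
      qed
      then show ?thesis using Op(1)[OF that] by blast
    qed
    have 2: "qFreshAbs xs v (qPsubstAbs \<sigma> A)" if "binp i = Some A" for i A
    proof -
      have "\<forall>ts t. \<not> qFreshAbs ts t A \<longrightarrow> (case \<sigma> ts t of None \<Rightarrow> (ts, t) \<noteq> (xs, v) | Some S \<Rightarrow> qFresh xs v S)"
      proof (intro allI impI)
        fix ts t assume "\<not> qFreshAbs ts t A"
        then have "\<not> qFresh ts t (qOp d inp binp)" using that by (auto simp: pred_option_iff)
        then show "case \<sigma> ts t of None \<Rightarrow> (ts, t) \<noteq> (xs, v) | Some S \<Rightarrow> qFresh xs v S" using h by blast
      qed
      then show ?thesis using Op(2)[OF that] by blast
    qed
    show "qFresh xs v (qPsubst \<sigma> (qOp d inp binp))" using 1 2 by (auto simp: pred_option_iff)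
  qed
next
  case (Abs ws w W)
  show ?case
  proof (intro allI impI)
    fix \<sigma> :: "'varSort \<Rightarrow> 'var \<Rightarrow> ('index,'bindex,'varSort,'var,'opSym) qTerm option"
    assume h: "\<forall>ts t. \<not> qFreshAbs ts t (qAbs ws w W) \<longrightarrow> (case \<sigma> ts t of None \<Rightarrow> (ts, t) \<noteq> (xs, v) | Some S \<Rightarrow> qFresh xs v S)"
    define w1 where "w1 = (SOME x'. qAFresh ws x' W \<and> (\<forall>zs z Z. \<sigma> zs z = Some Z \<longrightarrow> qAFresh ws x' Z))"
    have e: "qPsubstAbs \<sigma> (qAbs ws w W) = qAbs ws w1 (qPsubst (upd \<sigma> ws w (qVar ws w1)) W)"
      by (simp add: w1_def upd_def Let_def)
    show "qFreshAbs xs v (qPsubstAbs \<sigma> (qAbs ws w W))"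
    proof (cases "(xs, v) = (ws, w1)")
      case True then show ?thesis unfolding e by auto
    next
      case False
      have "\<forall>ts t. \<not> qFresh ts t W \<longrightarrow> (case upd \<sigma> ws w (qVar ws w1) ts t of None \<Rightarrow> (ts, t) \<noteq> (xs, v) | Some S \<Rightarrow> qFresh xs v S)"
      proof (intro allI impI)
        fix ts t assume nf: "\<not> qFresh ts t W"
        show "case upd \<sigma> ws w (qVar ws w1) ts t of None \<Rightarrow> (ts, t) \<noteq> (xs, v) | Some S \<Rightarrow> qFresh xs v S"
        proof (cases "(ts, t) = (ws, w)")
          case True then show ?thesis using False by (auto simp: upd_apply)
        next
          case False2: False
          then have "\<not> qFreshAbs ts t (qAbs ws w W)" using nf by auto
          then show ?thesis using h False2 by (auto simp: upd_apply)
        qed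
      qed
      then show ?thesis unfolding e using Abs by auto
    qed
  qed
qed

context VV begin

lemma ok_fresh:
  fixes X T :: "('index,'bindex,'varSort,'var,'opSym) qTerm"
  assumes ok: "okS \<sigma>" and gX: "qGood X" and gT: "qGood T" and F: "finite F"
  shows "\<exists>u. qAFresh ws u X \<and> qAFresh ws u T \<and> rangeFresh ws u \<sigma> \<and> u \<notin> F"
proof -
  have fs: "finite (supp \<sigma>)" and gs: "\<And>vs v S. \<sigma> vs v = Some S \<Longrightarrow> qGood S" using ok by (auto simp: okS_def)
  define U where "U = (\<Union>p\<in>supp \<sigma>. qVars (the (\<sigma> (fst p) (snd p))))"
  have "|U| <o |UNIV :: 'var set|" unfolding U_def
  proof (rule regularCard_UNION_bound[OF Cinf_var var_reg])
    show "|supp \<sigma>| <o |UNIV :: 'var set|" using finite_less_inf[OF fs var_inf] .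
    fix p assume "p \<in> supp \<sigma>"
    then obtain S where "\<sigma> (fst p) (snd p) = Some S" by (auto simp: supp_def)
    then show "|qVars (the (\<sigma> (fst p) (snd p)))| <o |UNIV :: 'var set|" using gs qGood_qVars(1) by auto
  qed
  then have "|qVars X \<union> qVars T \<union> U| <o |UNIV :: 'var set|"
    using Un_less_inf[OF var_inf Un_less_inf[OF var_inf qGood_qVars(1)[OF gX] qGood_qVars(1)[OF gT]]] by blast
  from fresh_avoid[OF this F, of ws] obtain u where u: "(ws, u) \<notin> qVars X \<union> qVars T \<union> U" "u \<notin> F" by blast
  have "rangeFresh ws u \<sigma>" unfolding rangeFresh_def
  proof (intro allI impI)
    fix vs v S assume "\<sigma> vs v = Some S"
    then have "qVars S \<subseteq> U" unfolding U_def by (force simp: supp_def)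
    then show "qAFresh ws u S" using u by (auto simp: qAFresh_qVars)
  qed
  then show ?thesis using u by (auto simp: qAFresh_qVars)
qed

lemma choice:
  fixes X :: "('index,'bindex,'varSort,'var,'opSym) qTerm"
  assumes ok: "okS \<sigma>" and gX: "qGood X"
  shows "\<exists>w1. qPsubstAbs \<sigma> (qAbs ws w X) = qAbs ws w1 (qPsubst (upd \<sigma> ws w (qVar ws w1)) X) \<and>
    qAFresh ws w1 X \<and> rangeFresh ws w1 \<sigma>"
proof -
  define P where "P = (\<lambda>x'. qAFresh ws x' X \<and> (\<forall>zs z Z. \<sigma> zs z = Some Z \<longrightarrow> qAFresh ws x' Z))"
  have "\<exists>x'. P x'" using ok_fresh[OF ok gX gX, of "{}" ws] by (auto simp: P_def rangeFresh_def)
  then have "P (SOME x'. P x')" by (rule someI_ex)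
  then show ?thesis unfolding P_def by (auto simp: Let_def upd_def rangeFresh_def)
qed

lemma qGood_qPsubst:
  fixes X :: "('index,'bindex,'varSort,'var,'opSym) qTerm"
    and A :: "('index,'bindex,'varSort,'var,'opSym) qAbs"
  shows "qGood X \<Longrightarrow> \<forall>\<sigma>. okS \<sigma> \<longrightarrow> qGood (qPsubst \<sigma> X)"
    "qGoodAbs A \<Longrightarrow> \<forall>\<sigma>. okS \<sigma> \<longrightarrow> qGoodAbs (qPsubstAbs \<sigma> A)"
proof (induct X and A rule: qT_induct qA_induct)
  case (Var xs x)
  show ?case
  proof (intro allI impI)
    fix \<sigma> :: "'varSort \<Rightarrow> 'var \<Rightarrow> ('index,'bindex,'varSort,'var,'opSym) qTerm option"
    assume "okS \<sigma>"
    then show "qGood (qPsubst \<sigma> (qVar xs x))" by (cases "\<sigma> xs x") (auto simp: okS_def)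
  qed
next
  case (Op d inp binp)
  have g: "\<And>i X. inp i = Some X \<Longrightarrow> qGood X" "\<And>i A. binp i = Some A \<Longrightarrow> qGoodAbs A"
    "|dom inp| <o |UNIV :: 'var set|" "|dom binp| <o |UNIV :: 'var set|"
    using Op(3) by (auto simp: pred_option_iff)
  show ?case
  proof (intro allI impI)
    fix \<sigma> :: "'varSort \<Rightarrow> 'var \<Rightarrow> ('index,'bindex,'varSort,'var,'opSym) qTerm option"
    assume ok: "okS \<sigma>"
    have 1: "\<forall>i. pred_option qGood (map_option (qPsubst \<sigma>) (inp i))"
    proof
      fix i show "pred_option qGood (map_option (qPsubst \<sigma>) (inp i))"
        using Op(1)[of i] g(1)[of i] ok by (cases "inp i") auto
    qed
    have 2: "\<forall>i. pred_option qGoodAbs (map_option (qPsubstAbs \<sigma>) (binp i))"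
    proof
      fix i show "pred_option qGoodAbs (map_option (qPsubstAbs \<sigma>) (binp i))"
        using Op(2)[of i] g(2)[of i] ok by (cases "binp i") auto
    qed
    show "qGood (qPsubst \<sigma> (qOp d inp binp))" using 1 2 g(3,4) by simp
  qed
next
  case (Abs xs x X)
  show ?case
  proof (intro allI impI)
    fix \<sigma> :: "'varSort \<Rightarrow> 'var \<Rightarrow> ('index,'bindex,'varSort,'var,'opSym) qTerm option"
    assume ok: "okS \<sigma>"
    have gX: "qGood X" using Abs(2) by simp
    obtain w1 where "qPsubstAbs \<sigma> (qAbs xs x X) = qAbs xs w1 (qPsubst (upd \<sigma> xs x (qVar xs w1)) X)"
      using choice[OF ok gX, of xs x] by blast
    moreover have "okS (upd \<sigma> xs x (qVar xs w1))" using okS_upd[OF ok] by simp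
    ultimately show "qGoodAbs (qPsubstAbs \<sigma> (qAbs xs x X))" using Abs(1)[OF gX] by simp
  qed
qed

end

context FS begin

abbreviation CGprop where
  "CGprop W \<equiv> (\<forall>\<sigma> T as a. okS \<sigma> \<longrightarrow> qGood T \<longrightarrow> qAFresh as a W \<longrightarrow>
     (\<forall>vs v S. \<sigma> vs v = Some S \<longrightarrow> S = qVar as a \<or> qAFresh as a S) \<longrightarrow>
     SUBST (qf (qPsubst \<sigma> W)) (qf T) a as = qf (qPsubst (repl \<sigma> as a T) W))"

lemma Ren:
  fixes W :: "('index,'bindex,'varSort,'var,'opSym) qTerm"
  assumes CG: "CGprop W" and gW: "qGood W" and ok: "okS \<sigma>"
    and f1: "qAFresh ws w1 W" "rangeFresh ws w1 \<sigma>"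
    and fv: "qAFresh ws v W" "rangeFresh ws v \<sigma>"
  shows "ABS ws w1 (qf (qPsubst (upd \<sigma> ws w (qVar ws w1)) W)) = ABS ws v (qf (qPsubst (upd \<sigma> ws w (qVar ws v)) W))"
proof (cases "w1 = v")
  case True then show ?thesis by simp
next
  case False
  define \<sigma>1 where "\<sigma>1 = upd \<sigma> ws w (qVar ws w1)"
  have ok1: "okS \<sigma>1" unfolding \<sigma>1_def using okS_upd[OF ok] by simp
  have gP: "qGood (qPsubst \<sigma>1 W)" using qGood_qPsubst(1)[OF gW] ok1 by simp
  have frP: "qFresh ws v (qPsubst \<sigma>1 W)"
  proof -
    have "\<forall>ts t. \<not> qFresh ts t W \<longrightarrow> (case \<sigma>1 ts t of None \<Rightarrow> (ts, t) \<noteq> (ws, v) | Some S \<Rightarrow> qFresh ws v S)"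
    proof (intro allI impI)
      fix ts t assume nf: "\<not> qFresh ts t W"
      then have "\<not> qAFresh ts t W" using qAFresh_qFresh(1)[of ts t W] by auto
      then have ne: "(ts, t) \<noteq> (ws, v)" using fv(1) by auto
      show "case \<sigma>1 ts t of None \<Rightarrow> (ts, t) \<noteq> (ws, v) | Some S \<Rightarrow> qFresh ws v S"
      proof (cases "(ts, t) = (ws, w)")
        case True then show ?thesis using False by (auto simp: \<sigma>1_def upd_apply)
      next
        case False2: False
        show ?thesis
        proof (cases "\<sigma> ts t")
          case None then show ?thesis using False2 ne by (auto simp: \<sigma>1_def upd_apply)
        next
          case (Some S)
          then have "qAFresh ws v S" using fv(2) by (auto simp: rangeFresh_def)
          then show ?thesis using Some False2 qAFresh_qFresh(1)[of ws v S] by (auto simp: \<sigma>1_def upd_apply)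
        qed
      qed
    qed
    then show ?thesis by (rule qFresh_qPsubst(1)[THEN spec, THEN mp])
  qed
  have e1: "ABS ws w1 (qf (qPsubst \<sigma>1 W)) = ABS ws v (SUBST (qf (qPsubst \<sigma>1 W)) (VAR ws v) w1 ws)"
    by (rule R2[OF qFresh_FRESH(1)[OF gP frP]])
  have rc: "\<forall>vs u S. \<sigma>1 vs u = Some S \<longrightarrow> S = qVar ws w1 \<or> qAFresh ws w1 S"
    using f1(2) by (auto simp: \<sigma>1_def upd_apply rangeFresh_def)
  have e2: "SUBST (qf (qPsubst \<sigma>1 W)) (qf (qVar ws v)) w1 ws = qf (qPsubst (repl \<sigma>1 ws w1 (qVar ws v)) W)"
    using CG[rule_format, of \<sigma>1 "qVar ws v" ws w1] ok1 f1(1) rc by simp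
  have e3: "repl \<sigma>1 ws w1 (qVar ws v) = upd \<sigma> ws w (qVar ws v)"
  proof (intro ext)
    fix vs u
    show "repl \<sigma>1 ws w1 (qVar ws v) vs u = upd \<sigma> ws w (qVar ws v) vs u"
    proof (cases "(vs, u) = (ws, w)")
      case True then show ?thesis by (auto simp: \<sigma>1_def repl_apply upd_apply)
    next
      case False
      have "\<sigma> vs u \<noteq> Some (qVar ws w1)" by (rule rangeFresh_not_var[OF f1(2)])
      then show ?thesis using False by (cases "\<sigma> vs u") (auto simp: \<sigma>1_def repl_apply upd_apply)
    qed
  qed
  show ?thesis using e1 e2 e3 by (simp add: \<sigma>1_def)
qed

lemma CG:
  fixes W :: "('index,'bindex,'varSort,'var,'opSym) qTerm"
    and B :: "('index,'bindex,'varSort,'var,'opSym) qAbs"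
  shows "qGood W \<Longrightarrow> CGprop W"
    "qGoodAbs B \<Longrightarrow> (\<forall>\<sigma> T as a. okS \<sigma> \<longrightarrow> qGood T \<longrightarrow> qAFreshAbs as a B \<longrightarrow>
     (\<forall>vs v S. \<sigma> vs v = Some S \<longrightarrow> S = qVar as a \<or> qAFresh as a S) \<longrightarrow>
     SUBSTABS (qfAbs (qPsubstAbs \<sigma> B)) (qf T) a as = qfAbs (qPsubstAbs (repl \<sigma> as a T) B))"
proof (induct W and B rule: qT_induct qA_induct)
  case (Var vs v)
  show ?case
  proof (intro allI impI)
    fix \<sigma> :: "'varSort \<Rightarrow> 'var \<Rightarrow> ('index,'bindex,'varSort,'var,'opSym) qTerm option"
      and T :: "('index,'bindex,'varSort,'var,'opSym) qTerm" and as a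
    assume ok: "okS \<sigma>" and gT: "qGood T" and fa: "qAFresh as a (qVar vs v)"
      and rc: "\<forall>vs v S. \<sigma> vs v = Some S \<longrightarrow> S = qVar as a \<or> qAFresh as a S"
    show "SUBST (qf (qPsubst \<sigma> (qVar vs v))) (qf T) a as = qf (qPsubst (repl \<sigma> as a T) (qVar vs v))"
    proof (cases "\<sigma> vs v")
      case None then show ?thesis using fa by (auto simp: S1 repl_apply)
    next
      case (Some S)
      have gS: "qGood S" using ok Some by (auto simp: okS_def)
      show ?thesis
      proof (cases "S = qVar as a")
        case True then show ?thesis using Some by (simp add: S1 repl_apply)
      next
        case False
        then have "qAFresh as a S" using rc Some by blast
        then show ?thesis using Some False subst_absent'[OF gS gT] by (simp add: repl_apply)
      qed
    qed
  qed
next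
  case (Op d inp binp)
  note g = good_Op_dest[OF Op(3)]
  show ?case
  proof (intro allI impI)
    fix \<sigma> :: "'varSort \<Rightarrow> 'var \<Rightarrow> ('index,'bindex,'varSort,'var,'opSym) qTerm option"
      and T :: "('index,'bindex,'varSort,'var,'opSym) qTerm" and as a
    assume ok: "okS \<sigma>" and gT: "qGood T" and fa: "qAFresh as a (qOp d inp binp)"
      and rc: "\<forall>vs v S. \<sigma> vs v = Some S \<longrightarrow> S = qVar as a \<or> qAFresh as a S"
    have d: "|dom (\<lambda>i. map_option (qPsubst \<sigma>) (inp i))| <o |UNIV :: 'var set|"
      "|dom (\<lambda>i. map_option (qPsubstAbs \<sigma>) (binp i))| <o |UNIV :: 'var set|" using g by simp_all
    show "SUBST (qf (qPsubst \<sigma> (qOp d inp binp))) (qf T) a as = qf (qPsubst (repl \<sigma> as a T) (qOp d inp binp))"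
      unfolding qPsubst.simps qf.simps S2'[OF d]
      unfolding option.map_comp o_def
    proof (intro arg_cong2[where f = "OP d"] ext map_option_cong2)
      fix i X assume iX: "inp i = Some X"
      have "pred_option (qAFresh as a) (inp i)" using fa by simp
      then have fX: "qAFresh as a X" using iX by simp
      show "SUBST (qf (qPsubst \<sigma> X)) (qf T) a as = qf (qPsubst (repl \<sigma> as a T) X)"
        using Op(1)[OF iX g(1)[OF iX], rule_format, of \<sigma> T as a] fX ok gT rc by simp
    next
      fix i A assume iA: "binp i = Some A"
      have "pred_option (qAFreshAbs as a) (binp i)" using fa by simp
      then have fA: "qAFreshAbs as a A" using iA by simp
      show "SUBSTABS (qfAbs (qPsubstAbs \<sigma> A)) (qf T) a as = qfAbs (qPsubstAbs (repl \<sigma> as a T) A)"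
        using Op(2)[OF iA g(2)[OF iA], rule_format, of \<sigma> T as a] fA ok gT rc by simp
    qed
  qed
next
  case (Abs ws w W)
  have gW: "qGood W" using Abs(2) by simp
  have IH: "CGprop W" using Abs(1)[OF gW] .
  show ?case
  proof (intro allI impI)
    fix \<sigma> :: "'varSort \<Rightarrow> 'var \<Rightarrow> ('index,'bindex,'varSort,'var,'opSym) qTerm option"
      and T :: "('index,'bindex,'varSort,'var,'opSym) qTerm" and as a
    assume ok: "okS \<sigma>" and gT: "qGood T" and fa: "qAFreshAbs as a (qAbs ws w W)"
      and rc: "\<forall>vs v S. \<sigma> vs v = Some S \<longrightarrow> S = qVar as a \<or> qAFresh as a S"
    have faW: "qAFresh as a W" and naw: "(as, a) \<noteq> (ws, w)" using fa by auto
    define \<rho> where "\<rho> = repl \<sigma> as a T"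
    have okr: "okS \<rho>" unfolding \<rho>_def using okS_repl[OF ok gT] .
    obtain w1 where c1: "qPsubstAbs \<sigma> (qAbs ws w W) = qAbs ws w1 (qPsubst (upd \<sigma> ws w (qVar ws w1)) W)"
      "qAFresh ws w1 W" "rangeFresh ws w1 \<sigma>" using choice[OF ok gW, of ws w] by blast
    obtain w2 where c2: "qPsubstAbs \<rho> (qAbs ws w W) = qAbs ws w2 (qPsubst (upd \<rho> ws w (qVar ws w2)) W)"
      "qAFresh ws w2 W" "rangeFresh ws w2 \<rho>" using choice[OF okr gW, of ws w] by blast
    obtain v where v: "qAFresh ws v W" "qAFresh ws v T" "rangeFresh ws v \<sigma>" "v \<notin> {a}"
      using ok_fresh[OF ok gW gT, of "{a}" ws] by blast
    have rfv: "rangeFresh ws v \<rho>" using v(2,3) by (auto simp: rangeFresh_def \<rho>_def repl_apply)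
    define \<sigma>v where "\<sigma>v = upd \<sigma> ws w (qVar ws v)"
    have okv: "okS \<sigma>v" unfolding \<sigma>v_def using okS_upd[OF ok] by simp
    have rcv: "\<forall>vs u S. \<sigma>v vs u = Some S \<longrightarrow> S = qVar as a \<or> qAFresh as a S"
      using rc v(4) by (auto simp: \<sigma>v_def upd_apply)
    have L1: "qfAbs (qPsubstAbs \<sigma> (qAbs ws w W)) = ABS ws v (qf (qPsubst \<sigma>v W))"
      unfolding c1 qfAbs.simps \<sigma>v_def by (rule Ren[OF IH gW ok c1(2,3) v(1,3)])
    have L2: "SUBSTABS (ABS ws v (qf (qPsubst \<sigma>v W))) (qf T) a as = ABS ws v (SUBST (qf (qPsubst \<sigma>v W)) (qf T) a as)"
      using v(4) qAFresh_FRESH[OF gT v(2)] by (subst S3) auto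
    have L3: "SUBST (qf (qPsubst \<sigma>v W)) (qf T) a as = qf (qPsubst (repl \<sigma>v as a T) W)"
      using IH[rule_format, of \<sigma>v T as a] okv gT faW rcv by simp
    have R1': "qfAbs (qPsubstAbs \<rho> (qAbs ws w W)) = ABS ws v (qf (qPsubst (upd \<rho> ws w (qVar ws v)) W))"
      unfolding c2 qfAbs.simps by (rule Ren[OF IH gW okr c2(2,3) v(1) rfv])
    have eq: "repl \<sigma>v as a T = upd \<rho> ws w (qVar ws v)"
      using v(4) by (auto simp: \<sigma>v_def \<rho>_def repl_apply upd_apply fun_eq_iff)
    show "SUBSTABS (qfAbs (qPsubstAbs \<sigma> (qAbs ws w W))) (qf T) a as = qfAbs (qPsubstAbs (repl \<sigma> as a T) (qAbs ws w W))"
      unfolding L1 L2 L3 \<rho>_def[symmetric] R1' eq ..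
  qed
qed

end

context FS begin

lemma E3:
  fixes X :: "('index,'bindex,'varSort,'var,'opSym) qTerm"
    and B :: "('index,'bindex,'varSort,'var,'opSym) qAbs"
  shows "qGood X \<Longrightarrow> \<forall>\<sigma> T. okS \<sigma> \<longrightarrow> (\<forall>vs v S. \<sigma> vs v = Some S \<longrightarrow> (\<exists>s u. S = qVar s u)) \<longrightarrow> qGood T \<longrightarrow>
      SUBST (qf (qPsubst \<sigma> X)) (qf T) y ys = qf (qPsubst (sigT \<sigma> ys y T) X)"
    "qGoodAbs B \<Longrightarrow> \<forall>\<sigma> T. okS \<sigma> \<longrightarrow> (\<forall>vs v S. \<sigma> vs v = Some S \<longrightarrow> (\<exists>s u. S = qVar s u)) \<longrightarrow> qGood T \<longrightarrow>
      SUBSTABS (qfAbs (qPsubstAbs \<sigma> B)) (qf T) y ys = qfAbs (qPsubstAbs (sigT \<sigma> ys y T) B)"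
proof (induct X and B rule: qT_induct qA_induct)
  case (Var vs v)
  show ?case
  proof (intro allI impI)
    fix \<sigma> :: "'varSort \<Rightarrow> 'var \<Rightarrow> ('index,'bindex,'varSort,'var,'opSym) qTerm option"
      and T :: "('index,'bindex,'varSort,'var,'opSym) qTerm"
    assume ok: "okS \<sigma>" and ren: "\<forall>vs v S. \<sigma> vs v = Some S \<longrightarrow> (\<exists>s u. S = qVar s u)" and gT: "qGood T"
    show "SUBST (qf (qPsubst \<sigma> (qVar vs v))) (qf T) y ys = qf (qPsubst (sigT \<sigma> ys y T) (qVar vs v))"
    proof (cases "\<sigma> vs v")
      case None then show ?thesis by (auto simp: S1 sigT_apply)
    next
      case (Some S)
      then obtain s u where "S = qVar s u" using ren by blast
      then show ?thesis using Some by (auto simp: S1 sigT_apply)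
    qed
  qed
next
  case (Op d inp binp)
  note g = good_Op_dest[OF Op(3)]
  show ?case
  proof (intro allI impI)
    fix \<sigma> :: "'varSort \<Rightarrow> 'var \<Rightarrow> ('index,'bindex,'varSort,'var,'opSym) qTerm option"
      and T :: "('index,'bindex,'varSort,'var,'opSym) qTerm"
    assume ok: "okS \<sigma>" and ren: "\<forall>vs v S. \<sigma> vs v = Some S \<longrightarrow> (\<exists>s u. S = qVar s u)" and gT: "qGood T"
    have d: "|dom (\<lambda>i. map_option (qPsubst \<sigma>) (inp i))| <o |UNIV :: 'var set|"
      "|dom (\<lambda>i. map_option (qPsubstAbs \<sigma>) (binp i))| <o |UNIV :: 'var set|" using g by simp_all
    show "SUBST (qf (qPsubst \<sigma> (qOp d inp binp))) (qf T) y ys = qf (qPsubst (sigT \<sigma> ys y T) (qOp d inp binp))"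
      unfolding qPsubst.simps qf.simps S2'[OF d]
      unfolding option.map_comp o_def
    proof (intro arg_cong2[where f = "OP d"] ext map_option_cong2)
      fix i X assume iX: "inp i = Some X"
      show "SUBST (qf (qPsubst \<sigma> X)) (qf T) y ys = qf (qPsubst (sigT \<sigma> ys y T) X)"
        using Op(1)[OF iX g(1)[OF iX], rule_format, of \<sigma> T] ok ren gT by simp
    next
      fix i A assume iA: "binp i = Some A"
      show "SUBSTABS (qfAbs (qPsubstAbs \<sigma> A)) (qf T) y ys = qfAbs (qPsubstAbs (sigT \<sigma> ys y T) A)"
        using Op(2)[OF iA g(2)[OF iA], rule_format, of \<sigma> T] ok ren gT by simp
    qed
  qed
next
  case (Abs ws w W)
  have gW: "qGood W" using Abs(2) by simp
  have CGW: "CGprop W" using CG(1)[OF gW] .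
  show ?case
  proof (intro allI impI)
    fix \<sigma> :: "'varSort \<Rightarrow> 'var \<Rightarrow> ('index,'bindex,'varSort,'var,'opSym) qTerm option"
      and T :: "('index,'bindex,'varSort,'var,'opSym) qTerm"
    assume ok: "okS \<sigma>" and ren: "\<forall>vs v S. \<sigma> vs v = Some S \<longrightarrow> (\<exists>s u. S = qVar s u)" and gT: "qGood T"
    define \<rho> where "\<rho> = sigT \<sigma> ys y T"
    have okr: "okS \<rho>" unfolding \<rho>_def using okS_sigT[OF ok gT] .
    obtain w1 where c1: "qPsubstAbs \<sigma> (qAbs ws w W) = qAbs ws w1 (qPsubst (upd \<sigma> ws w (qVar ws w1)) W)"
      "qAFresh ws w1 W" "rangeFresh ws w1 \<sigma>" using choice[OF ok gW, of ws w] by blast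
    obtain w2 where c2: "qPsubstAbs \<rho> (qAbs ws w W) = qAbs ws w2 (qPsubst (upd \<rho> ws w (qVar ws w2)) W)"
      "qAFresh ws w2 W" "rangeFresh ws w2 \<rho>" using choice[OF okr gW, of ws w] by blast
    obtain v where v: "qAFresh ws v W" "qAFresh ws v T" "rangeFresh ws v \<sigma>" "v \<notin> {y}"
      using ok_fresh[OF ok gW gT, of "{y}" ws] by blast
    have rfv: "rangeFresh ws v \<rho>" using v(2,3)
      by (auto simp: rangeFresh_def \<rho>_def sigT_apply split: option.splits if_splits)
    define \<sigma>v where "\<sigma>v = upd \<sigma> ws w (qVar ws v)"
    have okv: "okS \<sigma>v" unfolding \<sigma>v_def using okS_upd[OF ok] by simp
    have renv: "\<forall>vs u S. \<sigma>v vs u = Some S \<longrightarrow> (\<exists>s u. S = qVar s u)"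
      using ren by (auto simp: \<sigma>v_def upd_apply)
    have L1: "qfAbs (qPsubstAbs \<sigma> (qAbs ws w W)) = ABS ws v (qf (qPsubst \<sigma>v W))"
      unfolding c1 qfAbs.simps \<sigma>v_def by (rule Ren[OF CGW gW ok c1(2,3) v(1,3)])
    have L2: "SUBSTABS (ABS ws v (qf (qPsubst \<sigma>v W))) (qf T) y ys = ABS ws v (SUBST (qf (qPsubst \<sigma>v W)) (qf T) y ys)"
      using v(4) qAFresh_FRESH[OF gT v(2)] by (subst S3) auto
    have L3: "SUBST (qf (qPsubst \<sigma>v W)) (qf T) y ys = qf (qPsubst (sigT \<sigma>v ys y T) W)"
      using Abs(1)[OF gW, rule_format, of \<sigma>v T] okv renv gT by simp
    have R1': "qfAbs (qPsubstAbs \<rho> (qAbs ws w W)) = ABS ws v (qf (qPsubst (upd \<rho> ws w (qVar ws v)) W))"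
      unfolding c2 qfAbs.simps by (rule Ren[OF CGW gW okr c2(2,3) v(1) rfv])
    have eq: "sigT \<sigma>v ys y T = upd \<rho> ws w (qVar ws v)"
      using v(4) by (auto simp: \<sigma>v_def \<rho>_def sigT_apply upd_apply fun_eq_iff split: option.splits)
    show "SUBSTABS (qfAbs (qPsubstAbs \<sigma> (qAbs ws w W))) (qf T) y ys = qfAbs (qPsubstAbs (sigT \<sigma> ys y T) (qAbs ws w W))"
      unfolding L1 L2 L3 \<rho>_def[symmetric] R1' eq ..
  qed
qed

lemma IdRen:
  fixes X :: "('index,'bindex,'varSort,'var,'opSym) qTerm"
    and B :: "('index,'bindex,'varSort,'var,'opSym) qAbs"
  shows "qGood X \<Longrightarrow> \<forall>\<sigma>. okS \<sigma> \<longrightarrow> (\<forall>vs v S. \<sigma> vs v = Some S \<longrightarrow> S = qVar vs v) \<longrightarrow> qf (qPsubst \<sigma> X) = qf X"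
    "qGoodAbs B \<Longrightarrow> \<forall>\<sigma>. okS \<sigma> \<longrightarrow> (\<forall>vs v S. \<sigma> vs v = Some S \<longrightarrow> S = qVar vs v) \<longrightarrow> qfAbs (qPsubstAbs \<sigma> B) = qfAbs B"
proof (induct X and B rule: qT_induct qA_induct)
  case (Var vs v)
  show ?case
  proof (intro allI impI)
    fix \<sigma> :: "'varSort \<Rightarrow> 'var \<Rightarrow> ('index,'bindex,'varSort,'var,'opSym) qTerm option"
    assume "okS \<sigma>" and hid: "\<forall>vs v S. \<sigma> vs v = Some S \<longrightarrow> S = qVar vs v"
    show "qf (qPsubst \<sigma> (qVar vs v)) = qf (qVar vs v)"
    proof (cases "\<sigma> vs v")
      case None then show ?thesis by simp
    next
      case (Some a)
      then have "a = qVar vs v" using hid by blast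
      then show ?thesis using Some by simp
    qed
  qed
next
  case (Op d inp binp)
  note g = good_Op_dest[OF Op(3)]
  show ?case
  proof (intro allI impI)
    fix \<sigma> :: "'varSort \<Rightarrow> 'var \<Rightarrow> ('index,'bindex,'varSort,'var,'opSym) qTerm option"
    assume ok: "okS \<sigma>" and hid: "\<forall>vs v S. \<sigma> vs v = Some S \<longrightarrow> S = qVar vs v"
    show "qf (qPsubst \<sigma> (qOp d inp binp)) = qf (qOp d inp binp)"
      unfolding qPsubst.simps qf.simps option.map_comp o_def
    proof (intro arg_cong2[where f = "OP d"] ext map_option_cong2)
      fix i X assume iX: "inp i = Some X"
      show "qf (qPsubst \<sigma> X) = qf X" using Op(1)[OF iX g(1)[OF iX], rule_format, of \<sigma>] ok hid by simp
    next
      fix i A assume iA: "binp i = Some A"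
      show "qfAbs (qPsubstAbs \<sigma> A) = qfAbs A" using Op(2)[OF iA g(2)[OF iA], rule_format, of \<sigma>] ok hid by simp
    qed
  qed
next
  case (Abs ws w W)
  have gW: "qGood W" using Abs(2) by simp
  show ?case
  proof (intro allI impI)
    fix \<sigma> :: "'varSort \<Rightarrow> 'var \<Rightarrow> ('index,'bindex,'varSort,'var,'opSym) qTerm option"
    assume ok: "okS \<sigma>" and hid: "\<forall>vs v S. \<sigma> vs v = Some S \<longrightarrow> S = qVar vs v"
    obtain w1 where c1: "qPsubstAbs \<sigma> (qAbs ws w W) = qAbs ws w1 (qPsubst (upd \<sigma> ws w (qVar ws w1)) W)"
      "qAFresh ws w1 W" "rangeFresh ws w1 \<sigma>" using choice[OF ok gW, of ws w] by blast
    have ren: "\<forall>vs v S. \<sigma> vs v = Some S \<longrightarrow> (\<exists>s u. S = qVar s u)" using hid by blast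
    have e: "sigT \<sigma> ws w (qVar ws w1) = upd \<sigma> ws w (qVar ws w1)"
      using hid by (auto simp: sigT_apply upd_apply fun_eq_iff split: option.splits)
    have e1: "SUBST (qf (qPsubst \<sigma> W)) (qf (qVar ws w1)) w ws = qf (qPsubst (upd \<sigma> ws w (qVar ws w1)) W)"
      using E3(1)[OF gW, where y = w and ys = ws, rule_format, of \<sigma> "qVar ws w1"] ok ren e by simp
    have e2: "qf (qPsubst \<sigma> W) = qf W" using Abs(1)[OF gW, rule_format, of \<sigma>] ok hid by simp
    have e3: "ABS ws w (qf W) = ABS ws w1 (SUBST (qf W) (VAR ws w1) w ws)"
      by (rule R2[OF qAFresh_FRESH[OF gW c1(2)]])
    show "qfAbs (qPsubstAbs \<sigma> (qAbs ws w W)) = qfAbs (qAbs ws w W)"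
      unfolding c1 qfAbs.simps e3 using e1 e2 by simp
  qed
qed

lemma sigT_empty: "sigT (\<lambda>_ _. None) ys y Y = (\<lambda>_ _. None)(ys := (\<lambda>_. None)(y := Some Y))"
  by (auto simp: sigT_apply fun_eq_iff)

lemma qf_qSubst:
  fixes X Y :: "('index,'bindex,'varSort,'var,'opSym) qTerm"
  assumes "qGood X" "qGood Y"
  shows "qf (qSubst X Y y ys) = SUBST (qf X) (qf Y) y ys"
proof -
  have "qf (qSubst X Y y ys) = qf (qPsubst (sigT (\<lambda>_ _. None) ys y Y) X)"
    by (simp add: qSubst_def sigT_empty)
  also have "\<dots> = SUBST (qf (qPsubst (\<lambda>_ _. None) X)) (qf Y) y ys"
    by (rule E3(1)[OF assms(1), rule_format, symmetric]) (auto simp: okS_empty assms(2))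
  also have "qf (qPsubst (\<lambda>_ _. None) X) = qf X"
    using IdRen(1)[OF assms(1), rule_format, of "\<lambda>_ _. None"] okS_empty by simp
  finally show ?thesis .
qed

lemma qfAbs_qSubstAbs:
  fixes A :: "('index,'bindex,'varSort,'var,'opSym) qAbs" and Y :: "('index,'bindex,'varSort,'var,'opSym) qTerm"
  assumes "qGoodAbs A" "qGood Y"
  shows "qfAbs (qSubstAbs A Y y ys) = SUBSTABS (qfAbs A) (qf Y) y ys"
proof -
  have "qfAbs (qSubstAbs A Y y ys) = qfAbs (qPsubstAbs (sigT (\<lambda>_ _. None) ys y Y) A)"
    by (simp add: qSubstAbs_def sigT_empty)
  also have "\<dots> = SUBSTABS (qfAbs (qPsubstAbs (\<lambda>_ _. None) A)) (qf Y) y ys"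
    by (rule E3(2)[OF assms(1), rule_format, symmetric]) (auto simp: okS_empty assms(2))
  also have "qfAbs (qPsubstAbs (\<lambda>_ _. None) A) = qfAbs A"
    using IdRen(2)[OF assms(1), rule_format, of "\<lambda>_ _. None"] okS_empty by simp
  finally show ?thesis .
qed

lemma qGood_qSubst:
  fixes X Y :: "('index,'bindex,'varSort,'var,'opSym) qTerm"
  shows "qGood X \<Longrightarrow> qGood Y \<Longrightarrow> qGood (qSubst X Y y ys)"
  using qGood_qPsubst(1)[of X] okS_sigT[OF okS_empty, of Y ys y]
  by (simp add: qSubst_def sigT_empty)

lemma qGood_qSubstAbs:
  fixes A :: "('index,'bindex,'varSort,'var,'opSym) qAbs" and Y :: "('index,'bindex,'varSort,'var,'opSym) qTerm"
  shows "qGoodAbs A \<Longrightarrow> qGood Y \<Longrightarrow> qGoodAbs (qSubstAbs A Y y ys)"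
  using qGood_qPsubst(2)[of A] okS_sigT[OF okS_empty, of Y ys y]
  by (simp add: qSubstAbs_def sigT_empty)

end

context FS begin

lemma alpha_rep_abs:
  fixes q :: "('index,'bindex,'varSort,'var,'opSym) qTerm"
  assumes "qGood q" shows "alpha q (rep_term (abs_term q))"
proof -
  have "equivclp alpha (rep_term (abs_term q)) q"
    by (rule Quotient3_rep_abs[OF Quotient3_term]) simp
  then have "equivclp alpha q (rep_term (abs_term q))" by (rule equivclp_sym)
  then show ?thesis using equivclp_alpha assms by blast
qed

lemma alphaAbs_rep_abs:
  fixes q :: "('index,'bindex,'varSort,'var,'opSym) qAbs"
  assumes "qGoodAbs q" shows "alphaAbs q (rep_abs (abs_abs q))"
proof -
  have "equivclp alphaAbs (rep_abs (abs_abs q)) q"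
    by (rule Quotient3_rep_abs[OF Quotient3_abs]) simp
  then have "equivclp alphaAbs q (rep_abs (abs_abs q))" by (rule equivclp_sym)
  then show ?thesis using equivclp_alphaAbs assms by blast
qed

lemma qf_rep_abs:
  fixes q :: "('index,'bindex,'varSort,'var,'opSym) qTerm"
  assumes "qGood q" shows "qf (rep_term (abs_term q)) = qf q"
  using alpha_qf(1)[OF alpha_rep_abs[OF assms]] assms by simp

lemma qfAbs_rep_abs:
  fixes q :: "('index,'bindex,'varSort,'var,'opSym) qAbs"
  assumes "qGoodAbs q" shows "qfAbs (rep_abs (abs_abs q)) = qfAbs q"
  using alpha_qf(2)[OF alphaAbs_rep_abs[OF assms]] assms by simp

lemma good_abs_term:
  fixes q :: "('index,'bindex,'varSort,'var,'opSym) qTerm"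
  assumes "qGood q" shows "good (abs_term q)"
  using alpha_qGood(1)[OF alpha_rep_abs[OF assms]] assms by (simp add: good_def)

definition "ff X = qf (rep_term X)"
definition "ffAbs A = qfAbs (rep_abs A)"

lemma morph: "FSmorph VAR OP ABS FRESH FRESHABS SUBST SUBSTABS ff ffAbs"
  unfolding FSmorph_def
proof (intro conjI allI impI)
  fix xs x show "ff (Var xs x) = VAR xs x"
    unfolding ff_def Var_def using qf_rep_abs[of "qVar xs x"] by simp
next
  fix d and inp :: "'index \<Rightarrow> ('index,'bindex,'varSort,'var,'opSym) term option"
    and binp :: "'bindex \<Rightarrow> ('index,'bindex,'varSort,'var,'opSym) abs option"
  assume a: "liftAll good inp \<and> liftAll goodAbs binp \<and> |dom inp| <o |UNIV :: 'var set| \<and> |dom binp| <o |UNIV :: 'var set|"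
  have g: "qGood (qOp d (lift rep_term inp) (lift rep_abs binp))"
  proof -
    have 1: "\<forall>i. pred_option qGood (lift rep_term inp i)"
    proof
      fix i show "pred_option qGood (lift rep_term inp i)"
        using a by (cases "inp i") (auto simp: lift_def liftAll_def good_def)
    qed
    have 2: "\<forall>i. pred_option qGoodAbs (lift rep_abs binp i)"
    proof
      fix i show "pred_option qGoodAbs (lift rep_abs binp i)"
        using a by (cases "binp i") (auto simp: lift_def liftAll_def goodAbs_def)
    qed
    have 3: "dom (lift rep_term inp) = dom inp" "dom (lift rep_abs binp) = dom binp"
      by (auto simp: lift_def)
    show ?thesis using 1 2 3 a by simp
  qed
  show "ff (Op d inp binp) = OP d (lift ff inp) (lift ffAbs binp)"
    unfolding ff_def Op_def qf_rep_abs[OF g]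
    by (simp add: lift_def option.map_comp o_def ff_def[abs_def] ffAbs_def[abs_def])
next
  fix xs x and X :: "('index,'bindex,'varSort,'var,'opSym) term"
  assume "good X"
  then have g: "qGoodAbs (qAbs xs x (rep_term X))" by (simp add: good_def)
  show "ffAbs (Abs xs x X) = ABS xs x (ff X)"
    unfolding ffAbs_def Abs_def qfAbs_rep_abs[OF g] by (simp add: ff_def)
next
  fix X Y :: "('index,'bindex,'varSort,'var,'opSym) term" and y ys
  assume "good X \<and> good Y"
  then have g: "qGood (rep_term X)" "qGood (rep_term Y)" by (auto simp: good_def)
  show "ff (subst X Y y ys) = SUBST (ff X) (ff Y) y ys"
    unfolding ff_def subst_def qf_rep_abs[OF qGood_qSubst[OF g]] qf_qSubst[OF g] ..
next
  fix A :: "('index,'bindex,'varSort,'var,'opSym) abs" and Y :: "('index,'bindex,'varSort,'var,'opSym) term" and y ys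
  assume "goodAbs A \<and> good Y"
  then have g: "qGoodAbs (rep_abs A)" "qGood (rep_term Y)" by (auto simp: good_def goodAbs_def)
  show "ffAbs (substAbs A Y y ys) = SUBSTABS (ffAbs A) (ff Y) y ys"
    unfolding ff_def ffAbs_def substAbs_def qfAbs_rep_abs[OF qGood_qSubstAbs[OF g]] qfAbs_qSubstAbs[OF g] ..
next
  fix xs x and X :: "('index,'bindex,'varSort,'var,'opSym) term"
  assume "good X \<and> fresh xs x X"
  then show "FRESH xs x (ff X)" unfolding ff_def good_def fresh_def using qFresh_FRESH(1) by blast
next
  fix xs x and A :: "('index,'bindex,'varSort,'var,'opSym) abs"
  assume "goodAbs A \<and> freshAbs xs x A"
  then show "FRESHABS xs x (ffAbs A)" unfolding ffAbs_def goodAbs_def freshAbs_def using qFresh_FRESH(2) by blast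
qed

lemma uniq_aux:
  fixes q :: "('index,'bindex,'varSort,'var,'opSym) qTerm"
    and qa :: "('index,'bindex,'varSort,'var,'opSym) qAbs"
  assumes M: "FSmorph VAR OP ABS FRESH FRESHABS SUBST SUBSTABS g gAbs"
  shows "qGood q \<Longrightarrow> g (abs_term q) = qf q" "qGoodAbs qa \<Longrightarrow> gAbs (abs_abs qa) = qfAbs qa"
proof (induct q and qa rule: qT_induct qA_induct)
  case (Var xs x)
  then show ?case using M unfolding FSmorph_def Var_def[symmetric] by simp
next
  case (Op d inp binp)
  note gd = good_Op_dest[OF Op(3)]
  define inp' where "inp' = lift abs_term inp"
  define binp' where "binp' = lift abs_abs binp"
  have e: "abs_term (qOp d inp binp) = Op d inp' binp'"
    unfolding Op_def
  proof (rule Quotient3_rel_abs[OF Quotient3_term], rule r_into_equivclp, rule alpha_alphaAbs.alpha_Op)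
    show "\<forall>i. (inp i = None) = (lift rep_term inp' i = None)" "\<forall>i. (binp i = None) = (lift rep_abs binp' i = None)"
      by (auto simp: inp'_def binp'_def lift_def)
    show "\<forall>i X X'. inp i = Some X \<and> lift rep_term inp' i = Some X' \<longrightarrow> alpha X X'"
      using gd(1) alpha_rep_abs by (auto simp: inp'_def lift_def)
    show "\<forall>i A A'. binp i = Some A \<and> lift rep_abs binp' i = Some A' \<longrightarrow> alphaAbs A A'"
      using gd(2) alphaAbs_rep_abs by (auto simp: binp'_def lift_def)
  qed
  have la: "liftAll good inp'" unfolding liftAll_def inp'_def lift_def
    using gd(1) good_abs_term by auto
  have lb: "liftAll goodAbs binp'" unfolding liftAll_def binp'_def lift_def goodAbs_def
    using gd(2) alpha_qGood(2)[OF alphaAbs_rep_abs] by auto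
  have dd: "|dom inp'| <o |UNIV :: 'var set|" "|dom binp'| <o |UNIV :: 'var set|"
    using gd(3,4) by (auto simp: inp'_def binp'_def lift_def)
  have "g (Op d inp' binp') = OP d (lift g inp') (lift gAbs binp')"
    using M la lb dd unfolding FSmorph_def by blast
  also have "lift g inp' = (\<lambda>i. map_option qf (inp i))"
  proof
    fix i show "lift g inp' i = map_option qf (inp i)"
      using Op(1)[of i] gd(1)[of i] by (cases "inp i") (auto simp: inp'_def lift_def)
  qed
  also have "lift gAbs binp' = (\<lambda>i. map_option qfAbs (binp i))"
  proof
    fix i show "lift gAbs binp' i = map_option qfAbs (binp i)"
      using Op(2)[of i] gd(2)[of i] by (cases "binp i") (auto simp: binp'_def lift_def)
  qed
  finally show ?case unfolding e by simp
next
  case (Abs xs x W)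
  have gW: "qGood W" using Abs(2) by simp
  have e: "abs_abs (qAbs xs x W) = Abs xs x (abs_term W)"
    unfolding Abs_def
    by (rule Quotient3_rel_abs[OF Quotient3_abs], rule r_into_equivclp, rule alphaAbs_cong[OF gW alpha_rep_abs[OF gW]])
  have "gAbs (Abs xs x (abs_term W)) = ABS xs x (g (abs_term W))"
    using M good_abs_term[OF gW] unfolding FSmorph_def by blast
  then show ?case unfolding e using Abs(1)[OF gW] by simp
qed

lemma uniq:
  assumes M: "FSmorph VAR OP ABS FRESH FRESHABS SUBST SUBSTABS g gAbs"
  shows "(\<forall>X :: ('index,'bindex,'varSort,'var,'opSym) term. good X \<longrightarrow> ff X = g X) \<and>
    (\<forall>A :: ('index,'bindex,'varSort,'var,'opSym) abs. goodAbs A \<longrightarrow> ffAbs A = gAbs A)"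
proof (intro conjI allI impI)
  fix X :: "('index,'bindex,'varSort,'var,'opSym) term" assume "good X"
  then have "g (abs_term (rep_term X)) = qf (rep_term X)" using uniq_aux(1)[OF M] by (simp add: good_def)
  then show "ff X = g X" unfolding ff_def Quotient3_abs_rep[OF Quotient3_term] by simp
next
  fix A :: "('index,'bindex,'varSort,'var,'opSym) abs" assume "goodAbs A"
  then have "gAbs (abs_abs (rep_abs A)) = qfAbs (rep_abs A)" using uniq_aux(2)[OF M] by (simp add: goodAbs_def)
  then show "ffAbs A = gAbs A" unfolding ffAbs_def Quotient3_abs_rep[OF Quotient3_abs] by simp
qed

end

theorem theorem2:
  fixes VAR :: "'varSort \<Rightarrow> 'var \<Rightarrow> 'T"
    and OP :: "'opSym \<Rightarrow> ('index \<Rightarrow> 'T option) \<Rightarrow> ('bindex \<Rightarrow> 'A option) \<Rightarrow> 'T"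
    and ABS :: "'varSort \<Rightarrow> 'var \<Rightarrow> 'T \<Rightarrow> 'A"
    and FRESH :: "'varSort \<Rightarrow> 'var \<Rightarrow> 'T \<Rightarrow> bool"
    and FRESHABS :: "'varSort \<Rightarrow> 'var \<Rightarrow> 'A \<Rightarrow> bool"
    and SUBST :: "'T \<Rightarrow> 'T \<Rightarrow> 'var \<Rightarrow> 'varSort \<Rightarrow> 'T"
    and SUBSTABS :: "'A \<Rightarrow> 'T \<Rightarrow> 'var \<Rightarrow> 'varSort \<Rightarrow> 'A"
  assumes var_infinite: "infinite (UNIV :: 'var set)"
    and var_regular: "regularCard |UNIV :: 'var set|"
    and model: "FSmodel VAR OP ABS FRESH FRESHABS SUBST SUBSTABS"
  shows "\<exists>(f :: ('index,'bindex,'varSort,'var,'opSym) term \<Rightarrow> 'T)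
           (fAbs :: ('index,'bindex,'varSort,'var,'opSym) abs \<Rightarrow> 'A).
           FSmorph VAR OP ABS FRESH FRESHABS SUBST SUBSTABS f fAbs \<and>
           (\<forall>g gAbs. FSmorph VAR OP ABS FRESH FRESHABS SUBST SUBSTABS g gAbs \<longrightarrow>
              (\<forall>X. good X \<longrightarrow> f X = g X) \<and> (\<forall>A. goodAbs A \<longrightarrow> fAbs A = gAbs A))"
proof -
  interpret FS VAR OP ABS FRESH FRESHABS SUBST SUBSTABS
    by (unfold_locales; (rule var_infinite var_regular model)?)
  show ?thesis using morph uniq by blast
qed

end
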